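(* Let $L>0,\alpha>0$ and $h=\alpha L\sum_{k\in\mathbb Z}\delta\big(x-(k+\tfrac12)L\big)$. If there exist $\lambda>0$, $c>0$ and $\psi\in E_L$ such that $-\psi''+2\lambda\psi'-(\lambda^2-\lambda c+h(x))\psi=0$ in the weak sense, then $\psi$ is a piecewise $C^1$ function and $\psi(L/2)\ge\psi(x)$ for all $x\in\mathbb R$.
   Context: $\delta$ is the Dirac delta. $E_L$ is the set of positive $L$-periodic functions in $H^1_{loc}(\mathbb R)$ (in particular continuous). The weak sense means $\int(-\varphi''-2\lambda\varphi'-(\lambda^2-\lambda c)\varphi)\psi\,dx-\alpha L\sum_k\varphi((k+\tfrac12)L)\psi((k+\tfrac12)L)=0$ for all $\varphi\in C_0^\infty(\mathbb R)$. *)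

theory Defs
  imports "HOL-Analysis.Analysis"
begin

definition test_fun :: "(real \<Rightarrow> real) \<Rightarrow> bool" where
  "test_fun \<phi> \<longleftrightarrow> (\<forall>k x. ((deriv ^^ k) \<phi>) differentiable (at x))
                     \<and> (\<exists>R. \<forall>x. \<bar>x\<bar> > R \<longrightarrow> \<phi> x = 0)"

definition loc_L2 :: "(real \<Rightarrow> real) \<Rightarrow> bool" where
  "loc_L2 g \<longleftrightarrow> g \<in> borel_measurable lborel \<and>
     (\<forall>a b. set_integrable lborel {a..b} (\<lambda>x. (g x)\<^sup>2))"

definition H1_loc :: "(real \<Rightarrow> real) \<Rightarrow> bool" where
  "H1_loc \<psi> \<longleftrightarrow> loc_L2 \<psi> \<and> (\<exists>g. loc_L2 g \<and>
     (\<forall>\<phi>. test_fun \<phi> \<longrightarrow>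
        integral\<^sup>L lborel (\<lambda>x. \<psi> x * deriv \<phi> x) = - integral\<^sup>L lborel (\<lambda>x. g x * \<phi> x)))"

text \<open>E_L: positive L-periodic H^1_loc functions (taken as their continuous representative).\<close>
definition E_L :: "real \<Rightarrow> (real \<Rightarrow> real) set" where
  "E_L L = {\<psi>. continuous_on UNIV \<psi> \<and> (\<forall>x. \<psi> x > 0) \<and> (\<forall>x. \<psi> (x + L) = \<psi> x) \<and> H1_loc \<psi>}"

text \<open>Weak solution of -psi'' + 2 lambda psi' - (lambda^2 - lambda c + h) psi = 0 with
  h = alpha L sum_k delta(x - (k+1/2)L).\<close>
definition weak_sol :: "real \<Rightarrow> real \<Rightarrow> real \<Rightarrow> real \<Rightarrow> (real \<Rightarrow> real) \<Rightarrow> bool" where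
  "weak_sol L \<alpha> lam c \<psi> \<longleftrightarrow> (\<forall>\<phi>. test_fun \<phi> \<longrightarrow>
     integral\<^sup>L lborel (\<lambda>x. (- deriv (deriv \<phi>) x - 2 * lam * deriv \<phi> x - (lam\<^sup>2 - lam * c) * \<phi> x) * \<psi> x)
     - \<alpha> * L * (\<Sum>\<^sub>\<infinity>k::int. \<phi> ((real_of_int k + 1/2) * L) * \<psi> ((real_of_int k + 1/2) * L)) = 0)"

definition piecewise_C1 :: "(real \<Rightarrow> real) \<Rightarrow> bool" where
  "piecewise_C1 f \<longleftrightarrow> continuous_on UNIV f \<and> (\<exists>S.
     (\<forall>a b. finite (S \<inter> {a..b})) \<and>
     (\<forall>x. x \<notin> S \<longrightarrow> f differentiable (at x)) \<and>
     continuous_on (- S) (deriv f) \<and>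
     (\<forall>s\<in>S. (\<exists>l. (deriv f \<longlongrightarrow> l) (at_left s)) \<and> (\<exists>r. (deriv f \<longlongrightarrow> r) (at_right s))))"

end

theory Submission
  imports Defs
begin

definition smooth :: "(real \<Rightarrow> real) \<Rightarrow> bool" where
  "smooth f \<longleftrightarrow> (\<forall>k x. ((deriv ^^ k) f) differentiable (at x))"

lemma deriv_funpow_Suc: "(deriv ^^ Suc k) f = (deriv ^^ k) (deriv f)"
  by (subst funpow_Suc_right) simp

lemma smooth_deriv: "smooth f \<Longrightarrow> smooth (deriv f)"
  unfolding smooth_def by (metis deriv_funpow_Suc)

lemma smooth_diff: "smooth f \<Longrightarrow> f differentiable (at x)"
  unfolding smooth_def by (metis funpow_0)

lemma deriv_add_fun:
  fixes f g :: "real \<Rightarrow> real"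
  assumes "\<And>x. f differentiable (at x)" "\<And>x. g differentiable (at x)"
  shows "deriv (\<lambda>x. f x + g x) = (\<lambda>x. deriv f x + deriv g x)"
proof
  fix x
  have "DERIV f x :> deriv f x" "DERIV g x :> deriv g x"
    using assms by (simp_all add: DERIV_deriv_iff_real_differentiable)
  then show "deriv (\<lambda>x. f x + g x) x = deriv f x + deriv g x"
    by (intro DERIV_imp_deriv DERIV_add)
qed

lemma deriv_mult_fun:
  fixes f g :: "real \<Rightarrow> real"
  assumes "\<And>x. f differentiable (at x)" "\<And>x. g differentiable (at x)"
  shows "deriv (\<lambda>x. f x * g x) = (\<lambda>x. deriv f x * g x + f x * deriv g x)"
proof
  fix x
  have "DERIV f x :> deriv f x" "DERIV g x :> deriv g x"
    using assms by (simp_all add: DERIV_deriv_iff_real_differentiable)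
  then show "deriv (\<lambda>x. f x * g x) x = deriv f x * g x + f x * deriv g x"
    by (intro DERIV_imp_deriv) (auto intro!: derivative_eq_intros)
qed

lemma deriv_affine_fun:
  fixes f :: "real \<Rightarrow> real" and c s t :: real
  assumes "\<And>x. f differentiable (at x)"
  shows "deriv (\<lambda>x. c * f (s * x + t)) = (\<lambda>x. (c * s) * deriv f (s * x + t))"
proof
  fix x
  have "DERIV f (s*x+t) :> deriv f (s*x+t)"
    using assms by (simp add: DERIV_deriv_iff_real_differentiable)
  then show "deriv (\<lambda>x. c * f (s * x + t)) x = (c * s) * deriv f (s * x + t)"
    by (intro DERIV_imp_deriv) (auto intro!: derivative_eq_intros DERIV_chain2[where f=f])
qed

lemma funpow_deriv_add:
  "\<forall>(f::real\<Rightarrow>real) g. (\<forall>j<k. \<forall>x. (deriv^^j) f differentiable (at x) \<and> (deriv^^j) g differentiable (at x)) \<longrightarrow>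
     (deriv^^k) (\<lambda>x. f x + g x) = (\<lambda>x. (deriv^^k) f x + (deriv^^k) g x)"
proof (induction k)
  case 0 then show ?case by simp
next
  case (Suc k)
  show ?case
  proof (intro allI impI)
    fix f g :: "real \<Rightarrow> real" assume H: "\<forall>j<Suc k. \<forall>x. (deriv^^j) f differentiable (at x) \<and> (deriv^^j) g differentiable (at x)"
    have d: "deriv (\<lambda>x. f x + g x) = (\<lambda>x. deriv f x + deriv g x)"
      using H[rule_format, of 0] by (intro deriv_add_fun) auto
    have "\<forall>j<k. \<forall>x. (deriv^^j) (deriv f) differentiable (at x) \<and> (deriv^^j) (deriv g) differentiable (at x)"
      using H by (metis Suc_mono deriv_funpow_Suc)
    then show "(deriv^^Suc k) (\<lambda>x. f x + g x) = (\<lambda>x. (deriv^^Suc k) f x + (deriv^^Suc k) g x)"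
      using Suc.IH unfolding deriv_funpow_Suc d by blast
  qed
qed

lemma funpow_deriv_affine:
  fixes s t :: real
  shows "\<forall>(f::real\<Rightarrow>real) c. (\<forall>j<k. \<forall>x. (deriv^^j) f differentiable (at x)) \<longrightarrow>
     (deriv^^k) (\<lambda>x. c * f (s * x + t)) = (\<lambda>x. (c * s^k) * (deriv^^k) f (s * x + t))"
proof (induction k)
  case 0 then show ?case by simp
next
  case (Suc k)
  show ?case
  proof (intro allI impI)
    fix f :: "real \<Rightarrow> real" and c :: real assume H: "\<forall>j<Suc k. \<forall>x. (deriv^^j) f differentiable (at x)"
    have d: "deriv (\<lambda>x. c * f (s * x + t)) = (\<lambda>x. (c * s) * deriv f (s * x + t))"
      using H[rule_format, of 0] by (intro deriv_affine_fun) auto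
    have "\<forall>j<k. \<forall>x. (deriv^^j) (deriv f) differentiable (at x)"
      using H by (metis Suc_mono deriv_funpow_Suc)
    then have "(deriv^^k) (\<lambda>x. (c * s) * deriv f (s * x + t)) = (\<lambda>x. ((c * s) * s^k) * (deriv^^k) (deriv f) (s * x + t))"
      using Suc.IH by blast
    then show "(deriv^^Suc k) (\<lambda>x. c * f (s * x + t)) = (\<lambda>x. (c * s^Suc k) * (deriv^^Suc k) f (s * x + t))"
      unfolding deriv_funpow_Suc d by (simp add: mult_ac)
  qed
qed

lemma smooth_affine:
  fixes c s t :: real
  assumes "smooth f" shows "smooth (\<lambda>x. c * f (s * x + t))"
  unfolding smooth_def
proof (intro allI)
  fix k x
  have eq: "(deriv^^k) (\<lambda>x. c * f (s * x + t)) = (\<lambda>x. (c * s^k) * (deriv^^k) f (s * x + t))"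
    using funpow_deriv_affine assms unfolding smooth_def by blast
  have "(deriv^^k) f differentiable (at (s*x+t))" using assms unfolding smooth_def by blast
  then obtain D where D: "DERIV ((deriv^^k) f) (s*x+t) :> D"
    using DERIV_deriv_iff_real_differentiable by blast
  have d1: "DERIV (\<lambda>x. s * x + t) x :> s" by (auto intro!: derivative_eq_intros)
  have "DERIV (\<lambda>x. (deriv^^k) f (s * x + t)) x :> D * s" using DERIV_chain2[OF D d1] .
  then have "DERIV (\<lambda>x. (c * s^k) * (deriv^^k) f (s * x + t)) x :> (c * s^k) * (D * s)"
    by (rule DERIV_cmult)
  then have "(\<lambda>x. (c * s^k) * (deriv^^k) f (s * x + t)) differentiable (at x)"
    using real_differentiable_def by blast
  then show "(deriv^^k) (\<lambda>x. c * f (s * x + t)) differentiable (at x)" by (subst eq)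
qed

lemma smooth_add:
  assumes "smooth f" "smooth g" shows "smooth (\<lambda>x. f x + g x)"
  unfolding smooth_def
proof (intro allI)
  fix k x
  have eq: "(deriv^^k) (\<lambda>x. f x + g x) = (\<lambda>x. (deriv^^k) f x + (deriv^^k) g x)"
    using funpow_deriv_add assms unfolding smooth_def by blast
  have "(\<lambda>x. (deriv^^k) f x + (deriv^^k) g x) differentiable (at x)"
    by (rule differentiable_add) (use assms in \<open>auto simp: smooth_def\<close>)
  then show "(deriv^^k) (\<lambda>x. f x + g x) differentiable (at x)" by (subst eq)
qed

lemma smooth_mult_aux:
  "\<forall>(f::real\<Rightarrow>real) g. smooth f \<longrightarrow> smooth g \<longrightarrow> (\<forall>j\<le>n. \<forall>x. (deriv^^j) (\<lambda>x. f x * g x) differentiable (at x))"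
proof (induction n)
  case 0
  show ?case
  proof (intro allI impI)
    fix f g :: "real \<Rightarrow> real" and j x assume "smooth f" "smooth g" "j \<le> (0::nat)"
    then show "(deriv^^j) (\<lambda>x. f x * g x) differentiable (at x)"
      using smooth_diff differentiable_mult by simp
  qed
next
  case (Suc k)
  show ?case
  proof (intro allI impI)
    fix f g :: "real \<Rightarrow> real" and j x assume f: "smooth f" and g: "smooth g" and j: "j \<le> Suc k"
    show "(deriv^^j) (\<lambda>x. f x * g x) differentiable (at x)"
    proof (cases "j \<le> k")
      case True then show ?thesis using Suc.IH f g by blast
    next
      case False
      then have jj: "j = Suc k" using j by simp
      have fd: "smooth (deriv f)" "smooth (deriv g)" using f g smooth_deriv by auto
      have d: "deriv (\<lambda>x. f x * g x) = (\<lambda>x. deriv f x * g x + f x * deriv g x)"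
        using f g smooth_diff by (intro deriv_mult_fun) auto
      have IH1: "\<forall>i\<le>k. \<forall>x. (deriv^^i) (\<lambda>x. deriv f x * g x) differentiable (at x)"
        using Suc.IH fd g by blast
      have IH2: "\<forall>i\<le>k. \<forall>x. (deriv^^i) (\<lambda>x. f x * deriv g x) differentiable (at x)"
        using Suc.IH fd f by blast
      have pre: "\<forall>i<k. \<forall>x. (deriv^^i) (\<lambda>x. deriv f x * g x) differentiable (at x) \<and> (deriv^^i) (\<lambda>x. f x * deriv g x) differentiable (at x)"
        using IH1 IH2 by auto
      have eq: "(deriv^^k) (\<lambda>x. deriv f x * g x + f x * deriv g x) =
            (\<lambda>x. (deriv^^k) (\<lambda>x. deriv f x * g x) x + (deriv^^k) (\<lambda>x. f x * deriv g x) x)"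
        using funpow_deriv_add pre by blast
      have "(\<lambda>x. (deriv^^k) (\<lambda>x. deriv f x * g x) x + (deriv^^k) (\<lambda>x. f x * deriv g x) x) differentiable (at x)"
        by (rule differentiable_add) (use IH1 IH2 in auto)
      then show ?thesis unfolding jj deriv_funpow_Suc d eq .
    qed
  qed
qed

lemma smooth_mult:
  assumes "smooth f" "smooth g" shows "smooth (\<lambda>x. f x * g x)"
  using smooth_mult_aux assms unfolding smooth_def by blast

lemma smooth_cmult: "smooth f \<Longrightarrow> smooth (\<lambda>x. c * f x)"
  using smooth_affine[of f c 1 0] by simp

lemma smooth_diff_fun: "smooth f \<Longrightarrow> smooth g \<Longrightarrow> smooth (\<lambda>x. f x - g x)"
  using smooth_add[of f "\<lambda>x. (-1) * g x"] smooth_cmult[of g "-1"] by simp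



lemma poly_exp_tendsto: "((\<lambda>t. poly p t * exp (- t)) \<longlongrightarrow> (0::real)) at_top"
proof -
  have "((\<lambda>t. \<Sum>i\<le>degree p. coeff p i * (t ^ i / exp t)) \<longlongrightarrow> (\<Sum>i\<le>degree p. coeff p i * 0)) at_top"
    by (intro tendsto_sum tendsto_mult tendsto_const tendsto_power_div_exp_0)
  moreover have "(\<lambda>t. \<Sum>i\<le>degree p. coeff p i * (t ^ i / exp t)) = (\<lambda>t. poly p t * exp (- t))"
    by (auto simp: poly_altdef sum_divide_distrib exp_minus field_simps)
  ultimately show ?thesis by simp
qed

fun Pk :: "nat \<Rightarrow> real poly" where
  "Pk 0 = 1"
| "Pk (Suc k) = [:0,0,1:] * (Pk k - pderiv (Pk k))"

definition Ek :: "nat \<Rightarrow> real \<Rightarrow> real" where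
  "Ek k x = (if x > 0 then poly (Pk k) (inverse x) * exp (- inverse x) else 0)"

lemma Ek_deriv_pos:
  fixes x :: real and p :: "real poly"
  assumes "x > 0"
  shows "DERIV (\<lambda>x. poly p (inverse x) * exp (- inverse x)) x :>
           poly ([:0,0,1:] * (p - pderiv p)) (inverse x) * exp (- inverse x)"
proof -
  have x0: "x \<noteq> 0" using assms by simp
  have di: "DERIV inverse x :> - (inverse x * inverse x)"
    using DERIV_inverse[OF x0] by (simp add: power2_eq_square)
  have d1: "DERIV (\<lambda>x. poly p (inverse x)) x :> poly (pderiv p) (inverse x) * (- (inverse x * inverse x))"
    using DERIV_chain2[OF poly_DERIV di] .
  have dmi: "DERIV (\<lambda>x. - inverse x) x :> inverse x * inverse x"
    using DERIV_minus[OF di] by simp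
  have d2: "DERIV (\<lambda>x. exp (- inverse x)) x :> exp (- inverse x) * (inverse x * inverse x)"
    using DERIV_chain2[OF DERIV_exp dmi] .
  have "DERIV (\<lambda>x. poly p (inverse x) * exp (- inverse x)) x :>
         poly (pderiv p) (inverse x) * (- (inverse x * inverse x)) * exp (- inverse x)
         + poly p (inverse x) * (exp (- inverse x) * (inverse x * inverse x))"
    using DERIV_mult[OF d1 d2] by (simp add: algebra_simps)
  moreover have "poly (pderiv p) (inverse x) * (- (inverse x * inverse x)) * exp (- inverse x)
         + poly p (inverse x) * (exp (- inverse x) * (inverse x * inverse x))
       = poly ([:0,0,1:] * (p - pderiv p)) (inverse x) * exp (- inverse x)"
    by (simp add: algebra_simps)
  ultimately show ?thesis by simp
qed

lemma Ek_DERIV: "DERIV (Ek k) x :> Ek (Suc k) x"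
proof (cases "x > 0")
  case True
  have "DERIV (\<lambda>x. poly (Pk k) (inverse x) * exp (- inverse x)) x :> Ek (Suc k) x"
    using Ek_deriv_pos[OF True, of "Pk k"] True by (simp add: Ek_def)
  then show ?thesis
    by (rule has_field_derivative_transform_within_open[where S="{0<..}"]) (use True in \<open>auto simp: Ek_def\<close>)
next
  case False
  show ?thesis
  proof (cases "x < 0")
    case True
    have "DERIV (\<lambda>x. 0) x :> 0" by simp
    then have "DERIV (Ek k) x :> 0"
      by (rule has_field_derivative_transform_within_open[where S="{..<0}"]) (use True in \<open>auto simp: Ek_def\<close>)
    then show ?thesis using True by (simp add: Ek_def)
  next
    case False
    then have x0: "x = 0" using \<open>\<not> x > 0\<close> by simp
    have L: "((\<lambda>y. (Ek k y - Ek k 0) / (y - 0)) \<longlongrightarrow> 0) (at_left 0)"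
    proof (rule Lim_transform_eventually)
      show "((\<lambda>y. 0::real) \<longlongrightarrow> 0) (at_left 0)" by simp
      have "\<forall>\<^sub>F y in at_left 0. y \<in> {-1<..<(0::real)}" by (rule eventually_at_left_real) simp
      then show "\<forall>\<^sub>F y in at_left 0. 0 = (Ek k y - Ek k 0) / (y - 0)"
        by eventually_elim (auto simp: Ek_def)
    qed
    have g: "((\<lambda>t. poly (pCons 0 (Pk k)) t * exp (- t)) \<longlongrightarrow> (0::real)) at_top"
      by (rule poly_exp_tendsto)
    have R: "((\<lambda>y. (Ek k y - Ek k 0) / (y - 0)) \<longlongrightarrow> 0) (at_right 0)"
    proof (rule Lim_transform_eventually)
      show "((\<lambda>y. poly (pCons 0 (Pk k)) (inverse y) * exp (- inverse y)) \<longlongrightarrow> 0) (at_right 0)"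
        using filterlim_compose[OF g filterlim_inverse_at_top_right] by (simp add: o_def)
      have "\<forall>\<^sub>F y in at_right 0. y \<in> {0<..<(1::real)}" by (rule eventually_at_right_real) simp
      then show "\<forall>\<^sub>F y in at_right 0. poly (pCons 0 (Pk k)) (inverse y) * exp (- inverse y) = (Ek k y - Ek k 0) / (y - 0)"
        by eventually_elim (auto simp: Ek_def field_simps)
    qed
    have "((\<lambda>y. (Ek k y - Ek k 0) / (y - 0)) \<longlongrightarrow> 0) (at 0)"
      using L R by (simp add: filterlim_at_split)
    then have "DERIV (Ek k) 0 :> 0" by (simp add: has_field_derivative_iff)
    then show ?thesis using x0 by (simp add: Ek_def)
  qed
qed

lemma deriv_Ek: "deriv (Ek k) = Ek (Suc k)"
  using Ek_DERIV DERIV_imp_deriv by blast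

lemma funpow_deriv_Ek: "(deriv ^^ k) (Ek 0) = Ek k"
  by (induction k) (simp_all add: deriv_Ek)

lemma smooth_Ek0: "smooth (Ek 0)"
  unfolding smooth_def funpow_deriv_Ek using Ek_DERIV real_differentiable_def by blast

lemma Ek0_eq: "Ek 0 x = (if x > 0 then exp (- inverse x) else 0)"
  by (simp add: Ek_def)

definition bump :: "real \<Rightarrow> real \<Rightarrow> real \<Rightarrow> real" where
  "bump c r x = Ek 0 (x - (c - r)) * Ek 0 ((c + r) - x)"

lemma smooth_bump: "smooth (bump c r)"
proof -
  have "smooth (\<lambda>x. 1 * Ek 0 (1 * x + (r - c)))" "smooth (\<lambda>x. 1 * Ek 0 ((-1) * x + (c + r)))"
    by (rule smooth_affine[OF smooth_Ek0])+
  then have "smooth (\<lambda>x. (1 * Ek 0 (1 * x + (r - c))) * (1 * Ek 0 ((-1) * x + (c + r))))"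
    by (rule smooth_mult)
  then show ?thesis unfolding bump_def by (simp add: algebra_simps)
qed

lemma bump_nonneg: "bump c r x \<ge> 0"
  by (simp add: bump_def Ek0_eq)

lemma bump_pos: "r > 0 \<Longrightarrow> bump c r c > 0"
  by (simp add: bump_def Ek0_eq)

lemma bump_zero: "x \<le> c - r \<or> x \<ge> c + r \<Longrightarrow> bump c r x = 0"
  by (auto simp: bump_def Ek0_eq)



definition supp_in :: "(real \<Rightarrow> real) \<Rightarrow> real \<Rightarrow> real \<Rightarrow> bool" where
  "supp_in f p q \<longleftrightarrow> (\<forall>x. x \<le> p \<or> x \<ge> q \<longrightarrow> f x = 0)"

lemma test_fun_smooth: "test_fun f \<Longrightarrow> smooth f"
  unfolding test_fun_def smooth_def by blast

lemma smooth_supp_test: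
  assumes "smooth f" "supp_in f p q" shows "test_fun f"
  unfolding test_fun_def
proof (intro conjI)
  show "\<forall>k x. (deriv ^^ k) f differentiable (at x)" using assms(1) unfolding smooth_def by blast
  show "\<exists>R. \<forall>x. R < \<bar>x\<bar> \<longrightarrow> f x = 0"
  proof (intro exI allI impI)
    fix x :: real assume "\<bar>p\<bar> + \<bar>q\<bar> < \<bar>x\<bar>"
    then have "x \<le> p \<or> x \<ge> q" by (cases "x \<ge> 0") auto
    then show "f x = 0" using assms(2) unfolding supp_in_def by blast
  qed
qed

lemma smooth_DERIV: "smooth f \<Longrightarrow> DERIV f x :> deriv f x"
  using smooth_diff DERIV_deriv_iff_real_differentiable by blast

lemma smooth_cont: "smooth f \<Longrightarrow> continuous_on S f"
  by (meson DERIV_isCont continuous_at_imp_continuous_on smooth_DERIV)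

lemma deriv_zero_outside:
  fixes f :: "real \<Rightarrow> real" and p q x :: real
  assumes "\<And>x. x < p \<or> x > q \<Longrightarrow> f x = 0" "x < p \<or> x > q"
  shows "deriv f x = 0"
proof -
  have "DERIV (\<lambda>x. 0) x :> 0" by simp
  then have "DERIV f x :> 0"
  proof (cases "x < p")
    case True
    show "DERIV (\<lambda>x. 0) x :> 0 \<Longrightarrow> DERIV f x :> 0"
      by (rule has_field_derivative_transform_within_open[where S="{..<p}"]) (use True assms in \<open>auto simp: open_lessThan\<close>)
  next
    case False then have "x > q" using assms by auto
    show "DERIV (\<lambda>x. 0) x :> 0 \<Longrightarrow> DERIV f x :> 0"
      by (rule has_field_derivative_transform_within_open[where S="{q<..}"]) (use \<open>x>q\<close> assms in \<open>auto simp: open_greaterThan\<close>)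
  qed
  then show ?thesis by (rule DERIV_imp_deriv)
qed

lemma supp_in_out: "supp_in f p q \<Longrightarrow> x < p \<or> x > q \<Longrightarrow> f x = 0"
  unfolding supp_in_def by auto

lemma supp_deriv1: "supp_in f p q \<Longrightarrow> x < p \<or> x > q \<Longrightarrow> deriv f x = 0"
  by (rule deriv_zero_outside[of p q f]) (auto simp: supp_in_def)

lemma supp_deriv2: "supp_in f p q \<Longrightarrow> x < p \<or> x > q \<Longrightarrow> deriv (deriv f) x = 0"
  by (rule deriv_zero_outside[of p q "deriv f"]) (auto intro: supp_deriv1)

lemma LtoHK:
  fixes f :: "real \<Rightarrow> real"
  assumes c: "continuous_on UNIV f" and z: "\<And>x. x < P \<or> x > Q \<Longrightarrow> f x = 0"
  shows "integral\<^sup>L lborel f = integral {P..Q} f"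
proof -
  have e: "(\<lambda>x. indicator {P..Q} x *\<^sub>R f x) = f"
  proof
    fix x show "indicator {P..Q} x *\<^sub>R f x = f x" using z[of x] by (cases "x \<in> {P..Q}") auto
  qed
  have "integrable lborel (\<lambda>x. indicator {P..Q} x *\<^sub>R f x)"
    by (rule borel_integrable_compact) (auto intro: continuous_on_subset[OF c])
  then have i: "integrable lborel f" using e by simp
  have h1: "(f has_integral integral\<^sup>L lborel f) UNIV" by (rule has_integral_integral_lborel[OF i])
  have "(f has_integral integral {P..Q} f) {P..Q}"
    by (intro integrable_integral integrable_continuous_interval continuous_on_subset[OF c]) auto
  then have "((\<lambda>x. if x \<in> {P..Q} then f x else 0) has_integral integral {P..Q} f) UNIV"
    using has_integral_restrict_UNIV by blast
  moreover have "(\<lambda>x. if x \<in> {P..Q} then f x else 0) = f"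
  proof
    fix x show "(if x \<in> {P..Q} then f x else 0) = f x" using z[of x] by (cases "x \<in> {P..Q}") auto
  qed
  ultimately have "(f has_integral integral {P..Q} f) UNIV" by simp
  then show ?thesis using h1 has_integral_unique by blast
qed

lemma FTC_at:
  fixes g :: "real \<Rightarrow> real"
  assumes "continuous_on {a..b} g" "a < x" "x < b"
  shows "DERIV (\<lambda>t. integral {a..t} g) x :> g x"
proof -
  have "((\<lambda>t. integral {a..t} g) has_real_derivative g x) (at x within {a..b})"
    by (rule integral_has_real_derivative) (use assms in auto)
  moreover have "at x within {a..b} = at x"
    by (rule at_within_interior) (use assms in auto)
  ultimately show ?thesis by simp
qed

lemma integral_zero_on:
  fixes g :: "real \<Rightarrow> real"
  assumes "\<And>x. x \<in> S \<Longrightarrow> g x = 0"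
  shows "integral S g = 0"
proof -
  have "integral S g = integral S (\<lambda>x. 0)" by (rule integral_cong) (use assms in auto)
  then show ?thesis by simp
qed

lemma integral_head:
  fixes g :: "real \<Rightarrow> real"
  assumes z: "\<And>x. x \<le> p \<Longrightarrow> g x = 0" and "t \<le> p"
  shows "integral {a..t} g = 0"
  by (rule integral_zero_on) (use assms in auto)

lemma FTC_zero_left:
  fixes g :: "real \<Rightarrow> real"
  assumes c: "continuous_on UNIV g" and z: "\<And>t. t \<le> c \<Longrightarrow> g t = 0" and ac: "a < c"
  shows "DERIV (\<lambda>t. integral {a..t} g) x :> g x"
proof (cases "x > a")
  case True
  show ?thesis by (rule FTC_at[where b="x+1"]) (use True in \<open>auto intro: continuous_on_subset[OF c]\<close>)
next
  case False
  have "DERIV (\<lambda>t. 0) x :> 0" by simp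
  then have "DERIV (\<lambda>t. integral {a..t} g) x :> 0"
    by (rule has_field_derivative_transform_within_open[where S="{..<c}"])
       (use False ac z integral_head[OF z] in \<open>auto simp: open_lessThan\<close>)
  then show ?thesis using False ac z by simp
qed

lemma integral_tail:
  fixes g :: "real \<Rightarrow> real"
  assumes c: "continuous_on UNIV g" and z: "\<And>x. x \<ge> q \<Longrightarrow> g x = 0" and "a \<le> q" "q \<le> t"
  shows "integral {a..t} g = integral {a..q} g"
proof -
  have "integral {a..q} g + integral {q..t} g = integral {a..t} g"
    by (rule Henstock_Kurzweil_Integration.integral_combine) (use assms in \<open>auto intro!: integrable_continuous_interval continuous_on_subset[OF c]\<close>)
  moreover have "integral {q..t} g = 0" by (rule integral_zero_on) (use z in auto)
  ultimately show ?thesis by simp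
qed



lemma double_antideriv:
  fixes \<theta> :: "real \<Rightarrow> real"
  assumes sm: "smooth \<theta>" and sp: "supp_in \<theta> a' b'" and aa: "a < a'" and ab: "a' < b'" and bb: "b' \<le> b"
    and m0: "integral {a..b} \<theta> = 0" and m1: "integral {a..b} (\<lambda>t. t * \<theta> t) = 0"
  shows "\<exists>\<phi>. test_fun \<phi> \<and> supp_in \<phi> a' b' \<and> deriv (deriv \<phi>) = \<theta>"
proof -
  define F where "F t = integral {a..t} \<theta>" for t
  define \<phi> where "\<phi> t = integral {a..t} F" for t
  define G where "G t = integral {a..t} (\<lambda>s. s * \<theta> s)" for t
  have ct: "continuous_on UNIV \<theta>" using sm smooth_cont by blast
  have z\<theta>: "\<And>t. t \<le> a' \<Longrightarrow> \<theta> t = 0" "\<And>t. t \<ge> b' \<Longrightarrow> \<theta> t = 0" using sp by (auto simp: supp_in_def)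
  have dF: "DERIV F x :> \<theta> x" for x unfolding F_def by (rule FTC_zero_left[OF ct z\<theta>(1) aa])
  have zF: "F t = 0" if "t \<le> a'" for t unfolding F_def by (rule integral_head[OF z\<theta>(1) that])
  have cF: "continuous_on UNIV F" using dF by (meson DERIV_isCont continuous_at_imp_continuous_on)
  have d\<phi>: "DERIV \<phi> x :> F x" for x unfolding \<phi>_def by (rule FTC_zero_left[OF cF zF aa])
  have z\<phi>: "\<phi> t = 0" if "t \<le> a'" for t unfolding \<phi>_def by (rule integral_head[OF zF that])
  have ct2: "continuous_on UNIV (\<lambda>s. s * \<theta> s)" by (intro continuous_intros ct)
  have dG: "DERIV G x :> x * \<theta> x" for x unfolding G_def by (rule FTC_zero_left[OF ct2 _ aa]) (use z\<theta> in auto)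
  have "\<exists>k. \<forall>x\<in>UNIV. \<phi> x - (x * F x - G x) = k"
  proof (rule has_derivative_zero_constant)
    fix x :: real
    have "DERIV (\<lambda>x. x * F x) x :> 1 * F x + x * \<theta> x"
      using DERIV_mult[OF DERIV_ident dF] by (simp add: mult.commute)
    then have "DERIV (\<lambda>x. \<phi> x - (x * F x - G x)) x :> F x - (1 * F x + x * \<theta> x - x * \<theta> x)"
      by (intro DERIV_diff d\<phi> dG)
    then have "DERIV (\<lambda>x. \<phi> x - (x * F x - G x)) x :> 0" by simp
    moreover have eq: "((*) (0::real)) = (\<lambda>h. 0)" by (simp add: fun_eq_iff)
    ultimately show "((\<lambda>x. \<phi> x - (x * F x - G x)) has_derivative (\<lambda>h. 0)) (at x within UNIV)"
      by (simp add: has_field_derivative_def)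
  qed simp
  then obtain k where k: "\<And>x. \<phi> x - (x * F x - G x) = k" by blast
  have "k = 0" using k[of a] by (simp add: \<phi>_def F_def G_def)
  have Fb: "F t = 0" if "t \<ge> b'" for t
  proof -
    have "F t = integral {a..b'} \<theta>" unfolding F_def by (rule integral_tail[OF ct z\<theta>(2)]) (use that aa ab in auto)
    also have "\<dots> = integral {a..b} \<theta>" by (rule integral_tail[OF ct z\<theta>(2), symmetric]) (use bb aa ab in auto)
    finally show ?thesis using m0 by simp
  qed
  have Gb: "G t = 0" if "t \<ge> b'" for t
  proof -
    have "G t = integral {a..b'} (\<lambda>s. s * \<theta> s)" unfolding G_def by (rule integral_tail[OF ct2]) (use that aa ab z\<theta> in auto)
    also have "\<dots> = integral {a..b} (\<lambda>s. s * \<theta> s)" by (rule integral_tail[OF ct2, symmetric]) (use bb aa ab z\<theta> in auto)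
    finally show ?thesis using m1 by simp
  qed
  have sup: "supp_in \<phi> a' b'"
    unfolding supp_in_def using z\<phi> k[unfolded \<open>k=0\<close>] Fb Gb by (metis diff_zero eq_iff_diff_eq_0 mult_zero_right)
  have D1: "deriv \<phi> = F" using d\<phi> DERIV_imp_deriv by blast
  have D2: "deriv F = \<theta>" using dF DERIV_imp_deriv by blast
  have "smooth \<phi>" unfolding smooth_def
  proof (intro allI)
    fix n x show "(deriv ^^ n) \<phi> differentiable (at x)"
    proof (cases n)
      case 0 then show ?thesis using d\<phi> real_differentiable_def by auto
    next
      case (Suc j) note n = this
      show ?thesis
      proof (cases j)
        case 0 then show ?thesis using n dF D1 real_differentiable_def by auto
      next
        case (Suc i)
        have "(deriv ^^ n) \<phi> = (deriv ^^ i) \<theta>" unfolding n Suc by (simp only: deriv_funpow_Suc D1 D2)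
        then show ?thesis using sm unfolding smooth_def by simp
      qed
    qed
  qed
  then show ?thesis using sup D1 D2 smooth_supp_test by blast
qed

lemma zero_by_tests:
  fixes v :: "real \<Rightarrow> real"
  assumes ab: "a < b" and cv: "continuous_on {a..b} v"
    and H: "\<And>\<theta> a' b'. smooth \<theta> \<Longrightarrow> a < a' \<Longrightarrow> a' < b' \<Longrightarrow> b' < b \<Longrightarrow> supp_in \<theta> a' b' \<Longrightarrow>
              integral {a..b} (\<lambda>x. v x * \<theta> x) = 0"
    and x0: "a < x0" "x0 < b"
  shows "v x0 = 0"
proof (rule ccontr)
  assume ne: "v x0 \<noteq> 0"
  define w where "w x = v x0 * v x" for x
  have w0: "w x0 > 0" using ne by (auto simp: w_def zero_less_mult_iff)
  have "isCont v x0" using continuous_on_interior[OF cv] x0 by auto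
  then have "isCont w x0" unfolding w_def by (intro continuous_intros)
  then have "\<forall>\<^sub>F x in at x0. 0 < w x" using w0 by (simp add: isCont_def order_tendstoD(1))
  then obtain d where d: "d > 0" "\<And>x. x \<noteq> x0 \<Longrightarrow> dist x x0 < d \<Longrightarrow> 0 < w x"
    unfolding eventually_at by blast
  define r where "r = min d (min (x0 - a) (b - x0)) / 2"
  have mm: "min d (min (x0 - a) (b - x0)) > 0" "min d (min (x0 - a) (b - x0)) \<le> d"
    "min d (min (x0 - a) (b - x0)) \<le> x0 - a" "min d (min (x0 - a) (b - x0)) \<le> b - x0"
    using d x0 by auto
  have r: "r > 0" "r < d" "a < x0 - r" "x0 + r < b" using mm unfolding r_def by linarith+
  define \<rho> where "\<rho> = bump x0 r"
  have sm: "smooth \<rho>" unfolding \<rho>_def by (rule smooth_bump)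
  have sp: "supp_in \<rho> (x0 - r) (x0 + r)" unfolding \<rho>_def supp_in_def by (auto intro: bump_zero)
  have "integral {a..b} (\<lambda>x. v x * \<rho> x) = 0" by (rule H[OF sm _ _ _ sp]) (use r in auto)
  then have I0: "integral {a..b} (\<lambda>x. w x * \<rho> x) = 0" unfolding w_def by (simp add: mult.assoc)
  have cwr: "continuous_on {a..b} (\<lambda>x. w x * \<rho> x)"
    unfolding w_def by (intro continuous_intros cv smooth_cont[OF sm])
  have nn: "0 \<le> w x * \<rho> x" for x
  proof (cases "x0 - r < x \<and> x < x0 + r")
    case True
    then have "w x > 0" using d r w0 by (cases "x = x0") (auto simp: dist_real_def)
    then show ?thesis using bump_nonneg \<rho>_def by simp
  next
    case False then have "\<rho> x = 0" using sp by (auto simp: supp_in_def)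
    then show ?thesis by simp
  qed
  have c1: "continuous_on (cbox a b) (\<lambda>x. w x * \<rho> x)" using cwr by simp
  have c2: "\<And>x. x \<in> box a b \<Longrightarrow> 0 \<le> w x * \<rho> x" using nn by blast
  have c3: "((\<lambda>x. w x * \<rho> x) has_integral 0) (cbox a b)"
    using I0 integrable_continuous_interval[OF cwr] by (metis box_real(2) has_integral_integrable_integral)
  have c4: "box a b \<noteq> {}" using ab by simp
  have c5: "x0 \<in> cbox a b" using x0 by simp
  have "w x0 * \<rho> x0 = 0"
    using has_integral_0_cbox_imp_0[where f="\<lambda>x. w x * \<rho> x" and a=a and b=b and x=x0] c1 c2 c3 c4 c5 by simp
  moreover have "\<rho> x0 > 0" unfolding \<rho>_def using bump_pos r by simp
  ultimately show False using w0 by simp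
qed



lemma int_smooth: "smooth f \<Longrightarrow> f integrable_on {a..b}"
  by (intro integrable_continuous_interval smooth_cont)

lemma int_cont: "continuous_on {a..b} (f::real\<Rightarrow>real) \<Longrightarrow> f integrable_on {a..b}"
  by (rule integrable_continuous_interval)

lemma bump_int_pos:
  assumes r: "r > 0" and "a < c - r" "c + r < b"
  shows "integral {a..b} (bump c r) > 0"
proof -
  have cb: "continuous_on {a..b} (bump c r)" by (intro smooth_cont smooth_bump)
  have "integral {a..b} (bump c r) \<ge> 0" by (intro integral_nonneg int_cont cb bump_nonneg)
  moreover have "integral {a..b} (bump c r) \<noteq> 0"
  proof
    assume I: "integral {a..b} (bump c r) = 0"
    have c3: "(bump c r has_integral 0) (cbox a b)"
      using I int_cont[OF cb] by (metis box_real(2) has_integral_integrable_integral)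
    have "bump c r c = 0"
      using has_integral_0_cbox_imp_0[where f="bump c r" and a=a and b=b and x=c] cb c3 assms bump_nonneg
      by simp
    then show False using bump_pos[OF r, of c] by linarith
  qed
  ultimately show ?thesis by simp
qed

lemma bump_moment:
  assumes r: "r > 0"
  shows "integral {a..b} (\<lambda>t. t * bump c r t) \<le> (c + r) * integral {a..b} (bump c r)"
    and "integral {a..b} (\<lambda>t. t * bump c r t) \<ge> (c - r) * integral {a..b} (bump c r)"
proof -
  have cb: "continuous_on {a..b} (bump c r)" by (intro smooth_cont smooth_bump)
  have i1: "bump c r integrable_on {a..b}" by (rule int_cont[OF cb])
  have i2: "(\<lambda>t. t * bump c r t) integrable_on {a..b}" by (intro int_cont continuous_intros cb)
  have i3: "(\<lambda>t. (c + r) * bump c r t) integrable_on {a..b}" by (intro int_cont continuous_intros cb)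
  have i4: "(\<lambda>t. (c - r) * bump c r t) integrable_on {a..b}" by (intro int_cont continuous_intros cb)
  have "0 \<le> integral {a..b} (\<lambda>t. (c + r) * bump c r t - t * bump c r t)"
  proof (rule integral_nonneg)
    show "(\<lambda>t. (c + r) * bump c r t - t * bump c r t) integrable_on {a..b}"
      by (intro int_cont continuous_intros cb)
    fix t show "0 \<le> (c + r) * bump c r t - t * bump c r t"
    proof (cases "t \<ge> c + r")
      case True then show ?thesis using bump_zero[of t c r] by simp
    next
      case False
      then have "0 \<le> (c + r - t) * bump c r t" using bump_nonneg[of c r t] by simp
      then show ?thesis by (simp add: algebra_simps)
    qed
  qed
  then show "integral {a..b} (\<lambda>t. t * bump c r t) \<le> (c + r) * integral {a..b} (bump c r)"
    using integral_diff[of "\<lambda>t. (c + r) * bump c r t" "{a..b}" "\<lambda>t. t * bump c r t"] i1 i2 i3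
    by simp
  have "0 \<le> integral {a..b} (\<lambda>t. t * bump c r t - (c - r) * bump c r t)"
  proof (rule integral_nonneg)
    show "(\<lambda>t. t * bump c r t - (c - r) * bump c r t) integrable_on {a..b}"
      by (intro int_cont continuous_intros cb)
    fix t show "0 \<le> t * bump c r t - (c - r) * bump c r t"
    proof (cases "t \<le> c - r")
      case True then show ?thesis using bump_zero[of t c r] by simp
    next
      case False
      then have "0 \<le> (t - (c - r)) * bump c r t" using bump_nonneg[of c r t] by simp
      then show ?thesis by (simp add: algebra_simps)
    qed
  qed
  then show "integral {a..b} (\<lambda>t. t * bump c r t) \<ge> (c - r) * integral {a..b} (bump c r)"
    using integral_diff[of "\<lambda>t. t * bump c r t" "{a..b}" "\<lambda>t. (c - r) * bump c r t"] i1 i2 i4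
    by simp
qed



lemma icm: "(g::real\<Rightarrow>real) integrable_on S \<Longrightarrow> (\<lambda>x. c * g x) integrable_on S"
  using integrable_on_cmult_left[of g S c] by simp

lemma lin3:
  fixes f g h :: "real \<Rightarrow> real"
  assumes "f integrable_on S" "g integrable_on S" "h integrable_on S"
  shows "integral S (\<lambda>t. f t - c * g t - d * h t) = integral S f - c * integral S g - d * integral S h"
proof -
  have "integral S (\<lambda>t. f t - c * g t - d * h t) = integral S (\<lambda>t. f t - c * g t) - integral S (\<lambda>t. d * h t)"
    by (intro integral_diff integrable_diff assms icm)
  also have "integral S (\<lambda>t. f t - c * g t) = integral S f - integral S (\<lambda>t. c * g t)"
    by (intro integral_diff assms icm)
  finally show ?thesis by simp
qed

lemma affine_by_tests:
  fixes u :: "real \<Rightarrow> real"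
  assumes ab: "a < b" and cu: "continuous_on {a..b} u"
    and H: "\<And>\<phi> a' b'. test_fun \<phi> \<Longrightarrow> a < a' \<Longrightarrow> a' < b' \<Longrightarrow> b' < b \<Longrightarrow> supp_in \<phi> a' b' \<Longrightarrow>
              integral {a..b} (\<lambda>x. u x * deriv (deriv \<phi>) x) = 0"
  shows "\<exists>p q. \<forall>x. a < x \<longrightarrow> x < b \<longrightarrow> u x = p + q * x"
proof -
  define r where "r = (b - a) / 8"
  define c1 where "c1 = a + (b - a) / 4"
  define c2 where "c2 = a + 3 * (b - a) / 4"
  define \<rho>1 where "\<rho>1 = bump c1 r"
  define \<rho>2 where "\<rho>2 = bump c2 r"
  define N0 where "N0 f = integral {a..b} f" for f :: "real \<Rightarrow> real"
  define N1 where "N1 f = integral {a..b} (\<lambda>t. t * f t)" for f :: "real \<Rightarrow> real"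
  define U where "U f = integral {a..b} (\<lambda>t. u t * f t)" for f :: "real \<Rightarrow> real"
  have r: "r > 0" using ab by (simp add: r_def)
  have cc: "a < c1 - r" "c1 + r < b" "a < c2 - r" "c2 + r < b" "c2 - r - (c1 + r) > 0"
    "c1 - r \<le> c2 - r" "c1 + r \<le> c2 + r"
    using ab unfolding r_def c1_def c2_def by (simp_all add: field_simps)
  have n1: "N0 \<rho>1 > 0" unfolding N0_def \<rho>1_def by (rule bump_int_pos) (use r cc in auto)
  have n2: "N0 \<rho>2 > 0" unfolding N0_def \<rho>2_def by (rule bump_int_pos) (use r cc in auto)
  have m1: "N1 \<rho>1 \<le> (c1 + r) * N0 \<rho>1" unfolding N0_def N1_def \<rho>1_def by (rule bump_moment(1)[OF r])
  have m2: "N1 \<rho>2 \<ge> (c2 - r) * N0 \<rho>2" unfolding N0_def N1_def \<rho>2_def by (rule bump_moment(2)[OF r])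
  define det where "det = N0 \<rho>1 * N1 \<rho>2 - N0 \<rho>2 * N1 \<rho>1"
  have "N0 \<rho>1 * N1 \<rho>2 \<ge> N0 \<rho>1 * ((c2 - r) * N0 \<rho>2)" using m2 n1 by (intro mult_left_mono) auto
  moreover have "N0 \<rho>2 * N1 \<rho>1 \<le> N0 \<rho>2 * ((c1 + r) * N0 \<rho>1)" using m1 n2 by (intro mult_left_mono) auto
  moreover have "N0 \<rho>1 * N0 \<rho>2 * ((c2 - r) - (c1 + r)) > 0"
    using n1 n2 cc by simp
  ultimately have det: "det > 0" unfolding det_def by (simp add: algebra_simps)
  define p where "p = (N1 \<rho>2 * U \<rho>1 - N1 \<rho>1 * U \<rho>2) / det"
  define q where "q = (N0 \<rho>1 * U \<rho>2 - N0 \<rho>2 * U \<rho>1) / det"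
  have sm1: "smooth \<rho>1" "smooth \<rho>2" unfolding \<rho>1_def \<rho>2_def by (rule smooth_bump)+
  have key: "integral {a..b} (\<lambda>x. (u x - (p + q * x)) * \<theta> x) = 0"
    if sm: "smooth \<theta>" and aa: "a < a'" and ab': "a' < b'" and bb: "b' < b" and sp: "supp_in \<theta> a' b'" for \<theta> a' b'
  proof -
    define s1 where "s1 = (N0 \<theta> * N1 \<rho>2 - N1 \<theta> * N0 \<rho>2) / det"
    define s2 where "s2 = (N0 \<rho>1 * N1 \<theta> - N1 \<rho>1 * N0 \<theta>) / det"
    define \<theta>' where "\<theta>' t = \<theta> t - s1 * \<rho>1 t - s2 * \<rho>2 t" for t
    have sm': "smooth \<theta>'" unfolding \<theta>'_def
      by (intro smooth_diff_fun smooth_cmult sm sm1)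
    define A' where "A' = min a' (c1 - r)"
    define B' where "B' = max b' (c2 + r)"
    have AB: "a < A'" "A' < B'" "B' < b" using aa ab' bb cc unfolding A'_def B'_def by auto
    have sp': "supp_in \<theta>' A' B'"
      unfolding supp_in_def
    proof (intro allI impI)
      fix x assume x: "x \<le> A' \<or> x \<ge> B'"
      then have "\<theta> x = 0" using sp unfolding supp_in_def A'_def B'_def by auto
      moreover have "\<rho>1 x = 0" unfolding \<rho>1_def by (rule bump_zero) (use x cc in \<open>auto simp: A'_def B'_def\<close>)
      moreover have "\<rho>2 x = 0" unfolding \<rho>2_def by (rule bump_zero) (use x cc in \<open>auto simp: A'_def B'_def\<close>)
      ultimately show "\<theta>' x = 0" by (simp add: \<theta>'_def)
    qed
    have ct: "continuous_on {a..b} \<theta>" "continuous_on {a..b} \<rho>1" "continuous_on {a..b} \<rho>2"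
      using sm sm1 smooth_cont by blast+
    have "N0 \<theta>' = N0 \<theta> - s1 * N0 \<rho>1 - s2 * N0 \<rho>2"
      unfolding N0_def \<theta>'_def by (intro lin3 int_cont ct)
    also have "\<dots> = 0" using det unfolding s1_def s2_def det_def by (simp add: field_simps)
    finally have z0: "N0 \<theta>' = 0" .
    have "N1 \<theta>' = N1 \<theta> - s1 * N1 \<rho>1 - s2 * N1 \<rho>2"
    proof -
      have "(\<lambda>t. t * \<theta>' t) = (\<lambda>t. t * \<theta> t - s1 * (t * \<rho>1 t) - s2 * (t * \<rho>2 t))"
        by (simp add: fun_eq_iff \<theta>'_def algebra_simps)
      then show ?thesis unfolding N1_def by (simp add: lin3 int_cont continuous_intros ct)
    qed
    also have "\<dots> = 0" using det unfolding s1_def s2_def det_def by (simp add: field_simps)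
    finally have z1: "N1 \<theta>' = 0" .
    obtain \<phi> where \<phi>: "test_fun \<phi>" "supp_in \<phi> A' B'" "deriv (deriv \<phi>) = \<theta>'"
      using double_antideriv[OF sm' sp' AB(1) AB(2) less_imp_le[OF AB(3)]] z0 z1 unfolding N0_def N1_def by blast
    have "U \<theta>' = 0" using H[OF \<phi>(1) AB \<phi>(2)] \<phi>(3) unfolding U_def by simp
    moreover have "U \<theta>' = U \<theta> - s1 * U \<rho>1 - s2 * U \<rho>2"
    proof -
      have "(\<lambda>t. u t * \<theta>' t) = (\<lambda>t. u t * \<theta> t - s1 * (u t * \<rho>1 t) - s2 * (u t * \<rho>2 t))"
        by (simp add: fun_eq_iff \<theta>'_def algebra_simps)
      then show ?thesis unfolding U_def by (simp add: lin3 int_cont continuous_intros ct cu)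
    qed
    moreover have "integral {a..b} (\<lambda>x. (u x - (p + q * x)) * \<theta> x) = U \<theta> - p * N0 \<theta> - q * N1 \<theta>"
    proof -
      have "(\<lambda>x. (u x - (p + q * x)) * \<theta> x) = (\<lambda>t. u t * \<theta> t - p * \<theta> t - q * (t * \<theta> t))"
        by (simp add: fun_eq_iff algebra_simps)
      then show ?thesis unfolding U_def N0_def N1_def by (simp add: lin3 int_cont continuous_intros ct cu)
    qed
    ultimately show ?thesis using det unfolding p_def q_def s1_def s2_def det_def
      by (simp add: field_simps)
  qed
  have "u x - (p + q * x) = 0" if "a < x" "x < b" for x
    by (rule zero_by_tests[OF ab _ key that]) (intro continuous_intros cu)
  then show ?thesis by auto
qed



lemma lin3p:
  fixes f g h :: "real \<Rightarrow> real"
  assumes "f integrable_on S" "g integrable_on S" "h integrable_on S"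
  shows "integral S (\<lambda>t. f t + c * g t + d * h t) = integral S f + c * integral S g + d * integral S h"
proof -
  have "integral S (\<lambda>t. f t + c * g t + d * h t) = integral S (\<lambda>t. f t + c * g t) + integral S (\<lambda>t. d * h t)"
    by (intro integral_add integrable_add assms icm)
  also have "integral S (\<lambda>t. f t + c * g t) = integral S f + integral S (\<lambda>t. c * g t)"
    by (intro integral_add assms icm)
  finally show ?thesis by simp
qed

lemma lin3q:
  fixes f g h :: "real \<Rightarrow> real"
  assumes "f integrable_on S" "g integrable_on S" "h integrable_on S"
  shows "integral S (\<lambda>t. a * f t + c * g t + d * h t) = a * integral S f + c * integral S g + d * integral S h"
  using lin3p[OF icm[OF assms(1)] assms(2,3), of a c d] by simp

lemma FTC_box:
  fixes H h :: "real \<Rightarrow> real"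
  assumes "P \<le> Q" and d: "\<And>x. P \<le> x \<Longrightarrow> x \<le> Q \<Longrightarrow> DERIV H x :> h x" and "H P = 0" "H Q = 0"
  shows "integral {P..Q} h = 0"
proof -
  have "(h has_integral (H Q - H P)) {P..Q}"
  proof (rule fundamental_theorem_of_calculus[OF assms(1)])
    fix x assume "x \<in> {P..Q}"
    then have "DERIV H x :> h x" using d by auto
    then show "(H has_vector_derivative h x) (at x within {P..Q})"
      by (simp add: has_real_derivative_iff_has_vector_derivative has_vector_derivative_at_within)
  qed
  then show ?thesis using assms by (simp add: integral_unique)
qed

lemma cont_box: "(\<And>x. P \<le> x \<Longrightarrow> x \<le> Q \<Longrightarrow> DERIV H x :> h x) \<Longrightarrow> continuous_on {P..Q} (H::real\<Rightarrow>real)"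
  by (meson DERIV_isCont atLeastAtMost_iff continuous_at_imp_continuous_on)

definition Psi1 :: "real \<Rightarrow> (real \<Rightarrow> real) \<Rightarrow> real \<Rightarrow> real" where
  "Psi1 L \<psi> x = integral {-L..x} \<psi>"
definition Psi2 :: "real \<Rightarrow> (real \<Rightarrow> real) \<Rightarrow> real \<Rightarrow> real" where
  "Psi2 L \<psi> x = integral {-L..x} (Psi1 L \<psi>)"
definition Uf :: "real \<Rightarrow> real \<Rightarrow> real \<Rightarrow> (real \<Rightarrow> real) \<Rightarrow> real \<Rightarrow> real" where
  "Uf L lam c \<psi> x = \<psi> x - 2 * lam * Psi1 L \<psi> x + (lam\<^sup>2 - lam * c) * Psi2 L \<psi> x"

lemma Psi1_DERIV: "continuous_on UNIV \<psi> \<Longrightarrow> x > -L \<Longrightarrow> DERIV (Psi1 L \<psi>) x :> \<psi> x"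
  unfolding Psi1_def[abs_def] by (rule FTC_at[where b="x+1"]) (auto intro: continuous_on_subset)

lemma Psi2_DERIV:
  assumes "continuous_on UNIV \<psi>" "x > -L" shows "DERIV (Psi2 L \<psi>) x :> Psi1 L \<psi> x"
proof -
  have "continuous_on {-L..x+1} (Psi1 L \<psi>)"
    unfolding Psi1_def[abs_def]
    by (rule indefinite_integral_continuous_1) (auto intro: integrable_continuous_interval continuous_on_subset[OF assms(1)])
  then show ?thesis unfolding Psi2_def[abs_def] by (rule FTC_at) (use assms in auto)
qed

lemma weak_identity:
  fixes \<psi> \<phi> :: "real \<Rightarrow> real"
  assumes c\<psi>: "continuous_on UNIV \<psi>" and t: "test_fun \<phi>" and sp: "supp_in \<phi> a' b'"
    and PQ: "-L < P" "P < a'" "a' < b'" "b' < Q"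
  shows "integral {P..Q} (\<lambda>x. Uf L lam c \<psi> x * deriv (deriv \<phi>) x) =
         - integral\<^sup>L lborel (\<lambda>x. (- deriv (deriv \<phi>) x - 2 * lam * deriv \<phi> x - (lam\<^sup>2 - lam * c) * \<phi> x) * \<psi> x)"
proof -
  define mu where "mu = lam\<^sup>2 - lam * c"
  define d1 where "d1 = deriv \<phi>"
  define d2 where "d2 = deriv d1"
  define P1 where "P1 = Psi1 L \<psi>"
  define P2 where "P2 = Psi2 L \<psi>"
  have sm: "smooth \<phi>" using t test_fun_smooth by blast
  have sm1: "smooth d1" unfolding d1_def using sm smooth_deriv by blast
  have sm2: "smooth d2" unfolding d2_def using sm1 smooth_deriv by blast
  have D0: "DERIV \<phi> x :> d1 x" for x unfolding d1_def using sm smooth_DERIV by blast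
  have D1: "DERIV d1 x :> d2 x" for x unfolding d2_def using sm1 smooth_DERIV by blast
  have cf: "continuous_on S \<phi>" "continuous_on S d1" "continuous_on S d2" for S
    using sm sm1 sm2 smooth_cont by blast+
  have z0: "\<phi> P = 0" "\<phi> Q = 0" using sp PQ unfolding supp_in_def by auto
  have z1: "d1 P = 0" "d1 Q = 0" unfolding d1_def using supp_deriv1[OF sp] PQ by auto
  have dP1: "DERIV P1 x :> \<psi> x" if "x \<ge> P" for x unfolding P1_def by (rule Psi1_DERIV[OF c\<psi>]) (use that PQ in auto)
  have dP2: "DERIV P2 x :> P1 x" if "x \<ge> P" for x unfolding P2_def P1_def by (rule Psi2_DERIV[OF c\<psi>]) (use that PQ in auto)
  have cP1: "continuous_on {P..Q} P1" by (rule cont_box[OF dP1]) auto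
  have cP2: "continuous_on {P..Q} P2" by (rule cont_box[OF dP2]) auto
  have cps: "continuous_on {P..Q} \<psi>" by (rule continuous_on_subset[OF c\<psi>]) auto
  note ints = int_cont continuous_intros cf cP1 cP2 cps
  define A where "A = integral {P..Q} (\<lambda>x. \<psi> x * d2 x)"
  define B where "B = integral {P..Q} (\<lambda>x. \<psi> x * d1 x)"
  define C where "C = integral {P..Q} (\<lambda>x. \<psi> x * \<phi> x)"
  define D where "D = integral {P..Q} (\<lambda>x. P1 x * d2 x)"
  define E where "E = integral {P..Q} (\<lambda>x. P2 x * d2 x)"
  define F where "F = integral {P..Q} (\<lambda>x. P1 x * d1 x)"
  have PQ': "P \<le> Q" using PQ by simp
  have "integral {P..Q} (\<lambda>x. \<psi> x * d1 x + 1 * (P1 x * d2 x) + 0 * (P1 x)) = 0"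
    by (rule FTC_box[OF PQ', of "\<lambda>x. P1 x * d1 x"]) (auto intro!: derivative_eq_intros dP1 D1 simp: z1)
  moreover have "integral {P..Q} (\<lambda>x. \<psi> x * d1 x + 1 * (P1 x * d2 x) + 0 * (P1 x)) = B + 1 * D + 0 * integral {P..Q} P1"
    unfolding B_def D_def by (rule lin3p) (intro ints)+
  ultimately have BD: "B + D = 0" by simp
  have "integral {P..Q} (\<lambda>x. P1 x * d1 x + 1 * (P2 x * d2 x) + 0 * (P1 x)) = 0"
    by (rule FTC_box[OF PQ', of "\<lambda>x. P2 x * d1 x"]) (auto intro!: derivative_eq_intros dP2 D1 simp: z1)
  moreover have "integral {P..Q} (\<lambda>x. P1 x * d1 x + 1 * (P2 x * d2 x) + 0 * (P1 x)) = F + 1 * E + 0 * integral {P..Q} P1"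
    unfolding F_def E_def by (rule lin3p) (intro ints)+
  ultimately have FE: "F + E = 0" by simp
  have "integral {P..Q} (\<lambda>x. \<psi> x * \<phi> x + 1 * (P1 x * d1 x) + 0 * (P1 x)) = 0"
    by (rule FTC_box[OF PQ', of "\<lambda>x. P1 x * \<phi> x"]) (auto intro!: derivative_eq_intros dP1 D0 simp: z0)
  moreover have "integral {P..Q} (\<lambda>x. \<psi> x * \<phi> x + 1 * (P1 x * d1 x) + 0 * (P1 x)) = C + 1 * F + 0 * integral {P..Q} P1"
    unfolding C_def F_def by (rule lin3p) (intro ints)+
  ultimately have CF: "C + F = 0" by simp
  have "integral {P..Q} (\<lambda>x. Uf L lam c \<psi> x * d2 x) =
        integral {P..Q} (\<lambda>x. \<psi> x * d2 x + (- 2 * lam) * (P1 x * d2 x) + mu * (P2 x * d2 x))"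
    by (rule integral_cong) (simp add: Uf_def P1_def P2_def mu_def algebra_simps)
  also have "\<dots> = A + (- 2 * lam) * D + mu * E" unfolding A_def D_def E_def by (rule lin3p) (intro ints)+
  finally have L1: "integral {P..Q} (\<lambda>x. Uf L lam c \<psi> x * d2 x) = A + (- 2 * lam) * D + mu * E" .
  have z: "(- d2 x - 2 * lam * d1 x - mu * \<phi> x) * \<psi> x = 0" if "x < P \<or> x > Q" for x
  proof -
    have "x < a' \<or> x > b'" using that PQ by auto
    then show ?thesis using supp_deriv1[OF sp] supp_deriv2[OF sp] supp_in_out[OF sp] unfolding d1_def d2_def by auto
  qed
  have "integral\<^sup>L lborel (\<lambda>x. (- d2 x - 2 * lam * d1 x - mu * \<phi> x) * \<psi> x) =
        integral {P..Q} (\<lambda>x. (- d2 x - 2 * lam * d1 x - mu * \<phi> x) * \<psi> x)"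
    by (rule LtoHK) (use z in \<open>auto intro!: continuous_intros cf c\<psi>\<close>)
  also have "\<dots> = integral {P..Q} (\<lambda>x. (-1) * (\<psi> x * d2 x) + (- 2 * lam) * (\<psi> x * d1 x) + (- mu) * (\<psi> x * \<phi> x))"
    by (rule integral_cong) (simp add: algebra_simps)
  also have "\<dots> = (-1) * A + (- 2 * lam) * B + (- mu) * C"
    unfolding A_def B_def C_def by (rule lin3q) (intro ints)+
  finally have L2: "integral\<^sup>L lborel (\<lambda>x. (- d2 x - 2 * lam * d1 x - mu * \<phi> x) * \<psi> x) = (-1) * A + (- 2 * lam) * B + (- mu) * C" .
  have L1': "integral {P..Q} (\<lambda>x. Uf L lam c \<psi> x * deriv (deriv \<phi>) x) = A + (- 2 * lam) * D + mu * E"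
    using L1 unfolding d1_def d2_def .
  have L2': "integral\<^sup>L lborel (\<lambda>x. (- deriv (deriv \<phi>) x - 2 * lam * deriv \<phi> x - (lam\<^sup>2 - lam * c) * \<phi> x) * \<psi> x)
     = (-1) * A + (- 2 * lam) * B + (- mu) * C"
    using L2 unfolding d1_def d2_def mu_def .
  have "D = - B" "E = C" using BD FE CF by linarith+
  then show ?thesis unfolding L1' L2' by simp
qed



lemma FTC_val:
  fixes H h :: "real \<Rightarrow> real"
  assumes "P \<le> Q" and d: "\<And>x. P \<le> x \<Longrightarrow> x \<le> Q \<Longrightarrow> DERIV H x :> h x"
  shows "integral {P..Q} h = H Q - H P"
proof -
  have "(h has_integral (H Q - H P)) {P..Q}"
  proof (rule fundamental_theorem_of_calculus[OF assms(1)])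
    fix x assume "x \<in> {P..Q}"
    then have "DERIV H x :> h x" using d by auto
    then show "(H has_vector_derivative h x) (at x within {P..Q})"
      by (simp add: has_real_derivative_iff_has_vector_derivative has_vector_derivative_at_within)
  qed
  then show ?thesis by (simp add: integral_unique)
qed

lemma kink_integral:
  fixes \<phi> :: "real \<Rightarrow> real"
  assumes t: "test_fun \<phi>" and sp: "supp_in \<phi> a' b'" and ab: "0 < a'" "a' < b'" "b' < Q" and m: "0 \<le> m" "m \<le> Q"
  shows "integral {0..Q} (\<lambda>x. max (x - m) 0 * deriv (deriv \<phi>) x) = \<phi> m"
proof -
  define d1 where "d1 = deriv \<phi>"
  define d2 where "d2 = deriv d1"
  have sm: "smooth \<phi>" using t test_fun_smooth by blast
  have sm1: "smooth d1" unfolding d1_def using sm smooth_deriv by blast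
  have sm2: "smooth d2" unfolding d2_def using sm1 smooth_deriv by blast
  have D0: "DERIV \<phi> x :> d1 x" for x unfolding d1_def using sm smooth_DERIV by blast
  have D1: "DERIV d1 x :> d2 x" for x unfolding d2_def using sm1 smooth_DERIV by blast
  have c2: "continuous_on S d2" for S using sm2 smooth_cont by blast
  have "integral {0..m} (\<lambda>x. max (x - m) 0 * d2 x) + integral {m..Q} (\<lambda>x. max (x - m) 0 * d2 x)
        = integral {0..Q} (\<lambda>x. max (x - m) 0 * d2 x)"
    by (rule Henstock_Kurzweil_Integration.integral_combine) (use m in \<open>auto intro!: int_cont continuous_intros c2\<close>)
  moreover have "integral {0..m} (\<lambda>x. max (x - m) 0 * d2 x) = 0" by (rule integral_zero_on) auto
  moreover have "integral {m..Q} (\<lambda>x. max (x - m) 0 * d2 x) = integral {m..Q} (\<lambda>x. (x - m) * d2 x)"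
    by (rule integral_cong) auto
  moreover have "integral {m..Q} (\<lambda>x. (x - m) * d2 x) = ((Q - m) * d1 Q - \<phi> Q) - ((m - m) * d1 m - \<phi> m)"
  proof (rule FTC_val[OF m(2)])
    fix x
    have dxm: "DERIV (\<lambda>x. x - m) x :> 1" by (auto intro!: derivative_eq_intros)
    have "DERIV (\<lambda>x. (x - m) * d1 x - \<phi> x) x :> (1 * d1 x + (x - m) * d2 x) - d1 x"
      using DERIV_diff[OF DERIV_mult[OF dxm D1] D0] by (simp add: mult.commute)
    then show "DERIV (\<lambda>x. (x - m) * d1 x - \<phi> x) x :> (x - m) * d2 x" by simp
  qed
  moreover have "d1 Q = 0" unfolding d1_def using supp_deriv1[OF sp] ab by auto
  moreover have "\<phi> Q = 0" using sp ab unfolding supp_in_def by auto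
  ultimately show ?thesis unfolding d1_def d2_def by simp
qed



context
  fixes L \<alpha> lam c :: real and \<psi> :: "real \<Rightarrow> real"
  assumes L: "L > 0" and al: "\<alpha> > 0" and lam: "lam > 0" and c: "c > 0"
    and E: "\<psi> \<in> E_L L" and W: "weak_sol L \<alpha> lam c \<psi>"
begin

lemma psi_cont: "continuous_on UNIV \<psi>" using E unfolding E_L_def by auto
lemma psi_pos: "\<psi> x > 0" using E unfolding E_L_def by auto
lemma psi_per: "\<psi> (x + L) = \<psi> x" using E unfolding E_L_def by auto

lemma psi_per_int: "\<psi> (x + real_of_int n * L) = \<psi> x"
proof -
  have nat: "\<psi> (y + real m * L) = \<psi> y" for y m
  proof (induction m)
    case 0 then show ?case by simp
  next
    case (Suc m)
    have "\<psi> (y + real (Suc m) * L) = \<psi> ((y + real m * L) + L)"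
      by (rule arg_cong[where f=\<psi>]) (simp add: algebra_simps)
    also have "\<dots> = \<psi> (y + real m * L)" by (rule psi_per)
    finally show ?case using Suc by simp
  qed
  show ?thesis
  proof (cases n rule: int_cases)
    case (nonneg m)
    then show ?thesis using nat by simp
  next
    case (neg m)
    have "\<psi> (x + real_of_int n * L) = \<psi> (x + real_of_int n * L + real (Suc m) * L)"
      using nat[of "x + real_of_int n * L" "Suc m"] by simp
    also have "x + real_of_int n * L + real (Suc m) * L = x"
    proof -
      have rn: "real_of_int n = -1 - real m" using neg by simp
      show ?thesis by (subst rn) (simp add: algebra_simps)
    qed
    finally show ?thesis .
  qed
qed

lemma weak': "test_fun \<phi> \<Longrightarrow>
   integral\<^sup>L lborel (\<lambda>x. (- deriv (deriv \<phi>) x - 2 * lam * deriv \<phi> x - (lam\<^sup>2 - lam * c) * \<phi> x) * \<psi> x)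
   = \<alpha> * L * (\<Sum>\<^sub>\<infinity>k::int. \<phi> ((real_of_int k + 1/2) * L) * \<psi> ((real_of_int k + 1/2) * L))"
proof -
  assume t: "test_fun \<phi>"
  have "integral\<^sup>L lborel (\<lambda>x. (- deriv (deriv \<phi>) x - 2 * lam * deriv \<phi> x - (lam\<^sup>2 - lam * c) * \<phi> x) * \<psi> x)
   - \<alpha> * L * (\<Sum>\<^sub>\<infinity>k::int. \<phi> ((real_of_int k + 1/2) * L) * \<psi> ((real_of_int k + 1/2) * L)) = 0"
    using W t unfolding weak_sol_def by blast
  then show ?thesis by (simp only: right_minus_eq)
qed

lemma kink_ge: "real_of_int k \<ge> 0 \<Longrightarrow> (real_of_int k + 1/2) * L \<ge> L/2"
  using L by (simp add: mult_nonneg_nonneg distrib_right)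
lemma kink_ge1: "real_of_int k \<ge> 1 \<Longrightarrow> (real_of_int k + 1/2) * L \<ge> 3*L/2"
proof -
  assume "real_of_int k \<ge> 1"
  then have "(real_of_int k - 1) * L \<ge> 0" using L by simp
  then show ?thesis by (simp add: algebra_simps)
qed
lemma kink_le: "real_of_int k \<le> -1 \<Longrightarrow> (real_of_int k + 1/2) * L \<le> -L/2"
proof -
  assume "real_of_int k \<le> -1"
  then have "(real_of_int k + 1) * L \<le> 0" using L by (simp add: mult_nonpos_nonneg)
  then show ?thesis by (simp add: algebra_simps)
qed

lemma sum_cell:
  assumes sp: "supp_in \<phi> a' b'" and "-L/2 \<le> a'" "b' \<le> L/2"
  shows "(\<Sum>\<^sub>\<infinity>k::int. \<phi> ((real_of_int k + 1/2) * L) * \<psi> ((real_of_int k + 1/2) * L)) = 0"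
proof (rule infsum_0)
  fix k :: int
  have "(real_of_int k + 1/2) * L \<le> a' \<or> (real_of_int k + 1/2) * L \<ge> b'"
  proof (cases "k \<ge> 0")
    case True then show ?thesis using kink_ge[of k] assms by simp
  next
    case False then have "real_of_int k \<le> -1" by simp
    then show ?thesis using kink_le[of k] assms by simp
  qed
  then show "\<phi> ((real_of_int k + 1/2) * L) * \<psi> ((real_of_int k + 1/2) * L) = 0"
    using sp unfolding supp_in_def by auto
qed

lemma sum_kink:
  assumes sp: "supp_in \<phi> a' b'" and "0 \<le> a'" "b' \<le> L"
  shows "(\<Sum>\<^sub>\<infinity>k::int. \<phi> ((real_of_int k + 1/2) * L) * \<psi> ((real_of_int k + 1/2) * L)) = \<phi> (L/2) * \<psi> (L/2)"
proof -
  have "(\<Sum>\<^sub>\<infinity>k::int. \<phi> ((real_of_int k + 1/2) * L) * \<psi> ((real_of_int k + 1/2) * L))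
      = (\<Sum>\<^sub>\<infinity>k\<in>{0::int}. \<phi> ((real_of_int k + 1/2) * L) * \<psi> ((real_of_int k + 1/2) * L))"
  proof (rule infsum_cong_neutral)
    fix k :: int assume "k \<in> UNIV - {0}"
    then have "real_of_int k \<ge> 1 \<or> real_of_int k \<le> -1" by auto
    then have "(real_of_int k + 1/2) * L \<le> a' \<or> (real_of_int k + 1/2) * L \<ge> b'"
    proof
      assume h: "real_of_int k \<ge> 1" show ?thesis using kink_ge1[of k, OF h] assms L by linarith
    next
      assume h: "real_of_int k \<le> -1" show ?thesis using kink_le[of k, OF h] assms L by linarith
    qed
    then show "\<phi> ((real_of_int k + 1/2) * L) * \<psi> ((real_of_int k + 1/2) * L) = 0"
      using sp unfolding supp_in_def by auto
  qed auto
  then show ?thesis by simp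
qed

lemma U_cont: "a > -L \<Longrightarrow> continuous_on {a..b} (Uf L lam c \<psi>)"
  unfolding Uf_def
  by (intro continuous_intros continuous_on_subset[OF psi_cont] cont_box[OF Psi1_DERIV[OF psi_cont]]
        cont_box[OF Psi2_DERIV[OF psi_cont]]) auto

lemma cell_rep: "\<exists>p q. \<forall>x. -L/2 < x \<longrightarrow> x < L/2 \<longrightarrow> Uf L lam c \<psi> x = p + q * x"
proof (rule affine_by_tests)
  show "-L/2 < L/2" using L by simp
  show "continuous_on {-L/2..L/2} (Uf L lam c \<psi>)" by (rule U_cont) (use L in simp)
  fix \<phi> a' b' assume t: "test_fun \<phi>" and h: "-L/2 < a'" "a' < b'" "b' < L/2" and sp: "supp_in \<phi> a' b'"
  have "integral {-L/2..L/2} (\<lambda>x. Uf L lam c \<psi> x * deriv (deriv \<phi>) x) =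
         - integral\<^sup>L lborel (\<lambda>x. (- deriv (deriv \<phi>) x - 2 * lam * deriv \<phi> x - (lam\<^sup>2 - lam * c) * \<phi> x) * \<psi> x)"
    by (rule weak_identity[OF psi_cont t sp]) (use h L in auto)
  also have "\<dots> = 0" using weak'[OF t] sum_cell[OF sp] h by simp
  finally show "integral {-L/2..L/2} (\<lambda>x. Uf L lam c \<psi> x * deriv (deriv \<phi>) x) = 0" .
qed

lemma kink_rep: "\<exists>p q. \<forall>x. 0 < x \<longrightarrow> x < L \<longrightarrow>
    Uf L lam c \<psi> x - (- \<alpha> * L * \<psi> (L/2)) * max (x - L/2) 0 = p + q * x"
proof (rule affine_by_tests)
  show "0 < L" using L by simp
  show "continuous_on {0..L} (\<lambda>x. Uf L lam c \<psi> x - (- \<alpha> * L * \<psi> (L/2)) * max (x - L/2) 0)"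
    by (intro continuous_intros U_cont) (use L in simp)
  fix \<phi> a' b' assume t: "test_fun \<phi>" and h: "0 < a'" "a' < b'" "b' < L" and sp: "supp_in \<phi> a' b'"
  have sm2: "smooth (deriv (deriv \<phi>))" using t test_fun_smooth smooth_deriv by blast
  have c2: "continuous_on S (deriv (deriv \<phi>))" for S using sm2 smooth_cont by blast
  have I1: "integral {0..L} (\<lambda>x. Uf L lam c \<psi> x * deriv (deriv \<phi>) x) =
         - integral\<^sup>L lborel (\<lambda>x. (- deriv (deriv \<phi>) x - 2 * lam * deriv \<phi> x - (lam\<^sup>2 - lam * c) * \<phi> x) * \<psi> x)"
    by (rule weak_identity[OF psi_cont t sp]) (use h L in auto)
  also have "\<dots> = - (\<alpha> * L * (\<phi> (L/2) * \<psi> (L/2)))" using weak'[OF t] sum_kink[OF sp] h by simp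
  finally have I1': "integral {0..L} (\<lambda>x. Uf L lam c \<psi> x * deriv (deriv \<phi>) x) = - (\<alpha> * L * (\<phi> (L/2) * \<psi> (L/2)))" .
  have I2: "integral {0..L} (\<lambda>x. max (x - L/2) 0 * deriv (deriv \<phi>) x) = \<phi> (L/2)"
    by (rule kink_integral[OF t sp]) (use h L in auto)
  have "integral {0..L} (\<lambda>x. (Uf L lam c \<psi> x - (- \<alpha> * L * \<psi> (L/2)) * max (x - L/2) 0) * deriv (deriv \<phi>) x)
      = integral {0..L} (\<lambda>x. Uf L lam c \<psi> x * deriv (deriv \<phi>) x - (- \<alpha> * L * \<psi> (L/2)) * (max (x - L/2) 0 * deriv (deriv \<phi>) x))"
    by (rule integral_cong) (simp add: algebra_simps)
  also have "\<dots> = integral {0..L} (\<lambda>x. Uf L lam c \<psi> x * deriv (deriv \<phi>) x) - (- \<alpha> * L * \<psi> (L/2)) * integral {0..L} (\<lambda>x. max (x - L/2) 0 * deriv (deriv \<phi>) x)"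
    by (subst integral_diff) (auto intro!: int_cont continuous_intros c2 U_cont icm simp: L)
  also have "\<dots> = 0" unfolding I1' I2 by (simp add: algebra_simps)
  finally show "integral {0..L} (\<lambda>x. (Uf L lam c \<psi> x - (- \<alpha> * L * \<psi> (L/2)) * max (x - L/2) 0) * deriv (deriv \<phi>) x) = 0" .
qed

end


definition kk :: "real \<Rightarrow> real \<Rightarrow> real" where "kk lam c = sqrt (lam * c)"
definition Fl :: "real \<Rightarrow> real \<Rightarrow> real \<Rightarrow> real \<Rightarrow> real \<Rightarrow> real" where
  "Fl lam c C1 C2 x = (C1 * exp ((lam + kk lam c) * x) - C2 * exp ((lam - kk lam c) * x)) / (2 * kk lam c)"
definition Fd :: "real \<Rightarrow> real \<Rightarrow> real \<Rightarrow> real \<Rightarrow> real \<Rightarrow> real" where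
  "Fd lam c C1 C2 x = ((lam + kk lam c) * C1 * exp ((lam + kk lam c) * x) - (lam - kk lam c) * C2 * exp ((lam - kk lam c) * x)) / (2 * kk lam c)"

lemma Fl_DERIV: "DERIV (Fl lam c C1 C2) x :> Fd lam c C1 C2 x"
proof -
  have "DERIV (\<lambda>x. C1 * exp ((lam + kk lam c) * x) - C2 * exp ((lam - kk lam c) * x)) x :>
     C1 * (exp ((lam + kk lam c) * x) * (lam + kk lam c)) - C2 * (exp ((lam - kk lam c) * x) * (lam - kk lam c))"
    by (intro DERIV_diff DERIV_cmult) (auto intro!: derivative_eq_intros)
  from DERIV_cdivide[OF this, of "2 * kk lam c"] show ?thesis
    unfolding Fl_def[abs_def] Fd_def by (simp add: algebra_simps)
qed

lemma Fl_cont: "isCont (Fl lam c C1 C2) x"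
  using Fl_DERIV DERIV_isCont by blast

lemma Fd_cont: "isCont (Fd lam c C1 C2) x"
  unfolding Fd_def divide_inverse by (intro continuous_intros)

lemma const_on_interval:
  fixes f :: "real \<Rightarrow> real"
  assumes "\<And>x. l < x \<Longrightarrow> x < m \<Longrightarrow> DERIV f x :> 0"
  shows "\<exists>C. \<forall>x. l < x \<longrightarrow> x < m \<longrightarrow> f x = C"
proof -
  have "\<exists>C. \<forall>x\<in>{l<..<m}. f x = C"
  proof (rule has_derivative_zero_constant)
    show "convex {l<..<m}" by simp
    fix x assume "x \<in> {l<..<m}"
    then have "DERIV f x :> 0" using assms by auto
    moreover have eq: "((*) (0::real)) = (\<lambda>h. 0)" by (simp add: fun_eq_iff)
    ultimately have "(f has_derivative (\<lambda>h. 0)) (at x)"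
      by (simp add: has_field_derivative_def)
    then show "(f has_derivative (\<lambda>h. 0)) (at x within {l<..<m})"
      by (rule has_derivative_at_withinI)
  qed
  then show ?thesis by auto
qed

lemma exp_solution:
  fixes h :: "real \<Rightarrow> real"
  assumes "\<And>x. l < x \<Longrightarrow> x < m \<Longrightarrow> DERIV h x :> r * h x"
  shows "\<exists>C. \<forall>x. l < x \<longrightarrow> x < m \<longrightarrow> h x = C * exp (r * x)"
proof -
  have "\<exists>C. \<forall>x. l < x \<longrightarrow> x < m \<longrightarrow> h x * exp (- (r * x)) = C"
  proof (rule const_on_interval)
    fix x assume "l < x" "x < m"
    then have d: "DERIV h x :> r * h x" using assms by auto
    have de: "DERIV (\<lambda>x. exp (- (r * x))) x :> exp (- (r * x)) * (- r)"
      by (auto intro!: derivative_eq_intros)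
    have "DERIV (\<lambda>x. h x * exp (- (r * x))) x :> r * h x * exp (- (r * x)) + h x * (exp (- (r * x)) * (- r))"
      using DERIV_mult[OF d de] by (simp add: mult_ac)
    then show "DERIV (\<lambda>x. h x * exp (- (r * x))) x :> 0" by (simp add: algebra_simps)
  qed
  then obtain C where C: "\<And>x. l < x \<Longrightarrow> x < m \<Longrightarrow> h x * exp (- (r * x)) = C" by blast
  have "h x = C * exp (r * x)" if "l < x" "x < m" for x
  proof -
    have "h x = h x * exp (- (r * x)) * exp (r * x)" by (simp add: exp_minus field_simps)
    then show ?thesis using C[OF that] by simp
  qed
  then show ?thesis by blast
qed

lemma eq_at_right_end:
  fixes f g :: "real \<Rightarrow> real"
  assumes "isCont f m" "isCont g m" "l < m" "\<And>x. l < x \<Longrightarrow> x < m \<Longrightarrow> f x = g x"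
  shows "f m = g m"
proof -
  have "(f \<longlongrightarrow> f m) (at_left m)" using assms(1) by (simp add: isCont_def filterlim_at_split)
  moreover have "(g \<longlongrightarrow> g m) (at_left m)" using assms(2) by (simp add: isCont_def filterlim_at_split)
  moreover have "\<forall>\<^sub>F x in at_left m. f x = g x"
  proof -
    have "\<forall>\<^sub>F x in at_left m. x \<in> {l<..<m}" by (rule eventually_at_left_real) (use assms in simp)
    then show ?thesis by eventually_elim (use assms(4) in auto)
  qed
  ultimately have "(f \<longlongrightarrow> g m) (at_left m)" using Lim_transform_eventually tendsto_cong by fastforce
  then show ?thesis using \<open>(f \<longlongrightarrow> f m) (at_left m)\<close> tendsto_unique trivial_limit_at_left_real by blast
qed

lemma eq_at_left_end:
  fixes f g :: "real \<Rightarrow> real"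
  assumes "isCont f l" "isCont g l" "l < m" "\<And>x. l < x \<Longrightarrow> x < m \<Longrightarrow> f x = g x"
  shows "f l = g l"
proof -
  have "(f \<longlongrightarrow> f l) (at_right l)" using assms(1) by (simp add: isCont_def filterlim_at_split)
  moreover have "(g \<longlongrightarrow> g l) (at_right l)" using assms(2) by (simp add: isCont_def filterlim_at_split)
  moreover have "\<forall>\<^sub>F x in at_right l. f x = g x"
  proof -
    have "\<forall>\<^sub>F x in at_right l. x \<in> {l<..<m}" by (rule eventually_at_right_real) (use assms in simp)
    then show ?thesis by eventually_elim (use assms(4) in auto)
  qed
  ultimately have "(f \<longlongrightarrow> g l) (at_right l)" using Lim_transform_eventually tendsto_cong by fastforce
  then show ?thesis using \<open>(f \<longlongrightarrow> f l) (at_right l)\<close> tendsto_unique trivial_limit_at_right_real by blast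
qed



context
  fixes L \<alpha> lam c :: real and \<psi> :: "real \<Rightarrow> real"
  assumes L: "L > 0" and al: "\<alpha> > 0" and lam: "lam > 0" and c: "c > 0"
    and E: "\<psi> \<in> E_L L" and W: "weak_sol L \<alpha> lam c \<psi>"
begin

lemmas cellr = cell_rep[OF L al lam c E W]
lemmas kinkr = kink_rep[OF L al lam c E W]
lemmas pcont = psi_cont[OF L al lam c E W]
lemmas ppos = psi_pos[OF L al lam c E W]
lemmas pper = psi_per[OF L al lam c E W]
lemmas pperi = psi_per_int[OF L al lam c E W]

lemma kk_facts: "kk lam c > 0" "kk lam c * kk lam c = lam * c"
  unfolding kk_def using lam c by (auto simp: real_sqrt_mult_self[of "lam * c"])

lemma cell_explicit:
  "\<exists>C1 C2. \<forall>x. -L/2 < x \<longrightarrow> x < L/2 \<longrightarrow> \<psi> x = Fl lam c C1 C2 x \<and> DERIV \<psi> x :> Fd lam c C1 C2 x"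
proof -
  define l where "l = -L/2"
  define m where "m = L/2"
  define mu where "mu = lam\<^sup>2 - lam * c"
  define k where "k = kk lam c"
  define r1 where "r1 = lam + k"
  define r2 where "r2 = lam - k"
  have k: "k > 0" "k * k = lam * c" using kk_facts unfolding k_def by auto
  have mu: "mu = r1 * r2" unfolding mu_def r1_def r2_def using k by (simp add: power2_eq_square algebra_simps)
  have lm: "l < m" "-L < l" using L unfolding l_def m_def by auto
  obtain p q where pq: "\<And>x. l < x \<Longrightarrow> x < m \<Longrightarrow> Uf L lam c \<psi> x = p + q * x"
    using cellr unfolding l_def m_def by blast
  define Dv where "Dv x = q + 2 * lam * \<psi> x - mu * Psi1 L \<psi> x" for x
  have dP1: "DERIV (Psi1 L \<psi>) x :> \<psi> x" if "l < x" for x using Psi1_DERIV[OF pcont] that lm by auto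
  have dP2: "DERIV (Psi2 L \<psi>) x :> Psi1 L \<psi> x" if "l < x" for x using Psi2_DERIV[OF pcont] that lm by auto
  have dpsi: "DERIV \<psi> x :> Dv x" if x: "l < x" "x < m" for x
  proof -
    have "DERIV (\<lambda>x. p + q * x + 2 * lam * Psi1 L \<psi> x - mu * Psi2 L \<psi> x) x :> 0 + q * 1 + 2 * lam * \<psi> x - mu * Psi1 L \<psi> x"
      by (intro DERIV_diff DERIV_add DERIV_cmult dP1 dP2 x DERIV_const DERIV_ident)
    then have "DERIV (\<lambda>x. p + q * x + 2 * lam * Psi1 L \<psi> x - mu * Psi2 L \<psi> x) x :> Dv x" by (simp add: Dv_def)
    then show ?thesis
    proof (rule has_field_derivative_transform_within_open[where S="{l<..<m}"])
      show "open {l<..<m}" by simp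
      show "x \<in> {l<..<m}" using x by simp
      fix y assume "y \<in> {l<..<m}"
      then show "p + q * y + 2 * lam * Psi1 L \<psi> y - mu * Psi2 L \<psi> y = \<psi> y"
        using pq[of y] unfolding Uf_def mu_def by simp
    qed
  qed
  have dDv: "DERIV Dv x :> 2 * lam * Dv x - mu * \<psi> x" if x: "l < x" "x < m" for x
  proof -
    have "DERIV (\<lambda>x. q + 2 * lam * \<psi> x - mu * Psi1 L \<psi> x) x :> 0 + 2 * lam * Dv x - mu * \<psi> x"
      by (intro DERIV_diff DERIV_add DERIV_cmult dP1 dpsi x DERIV_const)
    then show ?thesis unfolding Dv_def[abs_def] by simp
  qed
  have "\<exists>C. \<forall>x. l < x \<longrightarrow> x < m \<longrightarrow> Dv x - r2 * \<psi> x = C * exp (r1 * x)"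
  proof (rule exp_solution)
    fix x assume x: "l < x" "x < m"
    have "DERIV (\<lambda>x. Dv x - r2 * \<psi> x) x :> (2 * lam * Dv x - mu * \<psi> x) - r2 * Dv x"
      by (intro DERIV_diff DERIV_cmult dDv dpsi x)
    moreover have "(2 * lam * Dv x - mu * \<psi> x) - r2 * Dv x = r1 * (Dv x - r2 * \<psi> x)"
      unfolding mu r1_def r2_def by (simp add: algebra_simps)
    ultimately show "DERIV (\<lambda>x. Dv x - r2 * \<psi> x) x :> r1 * (Dv x - r2 * \<psi> x)" by simp
  qed
  then obtain C1 where C1: "\<And>x. l < x \<Longrightarrow> x < m \<Longrightarrow> Dv x - r2 * \<psi> x = C1 * exp (r1 * x)" by blast
  have "\<exists>C. \<forall>x. l < x \<longrightarrow> x < m \<longrightarrow> Dv x - r1 * \<psi> x = C * exp (r2 * x)"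
  proof (rule exp_solution)
    fix x assume x: "l < x" "x < m"
    have "DERIV (\<lambda>x. Dv x - r1 * \<psi> x) x :> (2 * lam * Dv x - mu * \<psi> x) - r1 * Dv x"
      by (intro DERIV_diff DERIV_cmult dDv dpsi x)
    moreover have "(2 * lam * Dv x - mu * \<psi> x) - r1 * Dv x = r2 * (Dv x - r1 * \<psi> x)"
      unfolding mu r1_def r2_def by (simp add: algebra_simps)
    ultimately show "DERIV (\<lambda>x. Dv x - r1 * \<psi> x) x :> r2 * (Dv x - r1 * \<psi> x)" by simp
  qed
  then obtain C2 where C2: "\<And>x. l < x \<Longrightarrow> x < m \<Longrightarrow> Dv x - r1 * \<psi> x = C2 * exp (r2 * x)" by blast
  have "\<psi> x = Fl lam c C1 C2 x \<and> DERIV \<psi> x :> Fd lam c C1 C2 x" if x: "l < x" "x < m" for x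
  proof -
    have e1: "Dv x - r2 * \<psi> x = C1 * exp (r1 * x)" and e2: "Dv x - r1 * \<psi> x = C2 * exp (r2 * x)"
      using C1 C2 x by auto
    have "C1 * exp (r1 * x) - C2 * exp (r2 * x) = (Dv x - r2 * \<psi> x) - (Dv x - r1 * \<psi> x)"
      by (simp only: e1 e2)
    also have "\<dots> = (2 * k) * \<psi> x" unfolding r1_def r2_def by (simp add: algebra_simps)
    finally have "C1 * exp (r1 * x) - C2 * exp (r2 * x) = (2 * k) * \<psi> x" .
    then have A: "\<psi> x = Fl lam c C1 C2 x" unfolding Fl_def r1_def r2_def k_def[symmetric] using k by (simp add: field_simps)
    have "r1 * C1 * exp (r1 * x) - r2 * C2 * exp (r2 * x) = (2 * k) * Dv x"
      unfolding mult.assoc e1[symmetric] e2[symmetric] unfolding r1_def r2_def by (simp add: algebra_simps)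
    then have "Dv x = Fd lam c C1 C2 x" unfolding Fd_def r1_def r2_def k_def[symmetric] using k by (simp add: field_simps)
    then show ?thesis using A dpsi[OF x] by simp
  qed
  then show ?thesis unfolding l_def m_def by blast
qed

end


lemma exp_strict: "(y::real) > 0 \<Longrightarrow> 1 + y < exp y"
proof -
  assume y: "y > 0"
  have a: "1 + y/2 \<le> exp (y/2)" by (rule exp_ge_add_one_self)
  have "(1 + y/2) * (1 + y/2) \<le> exp (y/2) * exp (y/2)"
    by (rule mult_mono[OF a a]) (use y in auto)
  also have "exp (y/2) * exp (y/2) = exp y" by (simp add: exp_add[symmetric])
  finally have "(1 + y/2) * (1 + y/2) \<le> exp y" .
  moreover have "1 + y < (1 + y/2) * (1 + y/2)" using y by (simp add: algebra_simps power2_eq_square)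
  ultimately show ?thesis by simp
qed

lemma algG: "k \<noteq> 0 \<Longrightarrow>
  ((lam + k) * C1 * A - (lam - k) * C2 * B) / (2 * k) - (lam + k) * ((C1 * A - C2 * B) / (2 * k)) = C2 * (B::real)"
  by (simp add: field_simps)
lemma algH: "k \<noteq> 0 \<Longrightarrow>
  ((lam + k) * C1 * A - (lam - k) * C2 * B) / (2 * k) - (lam - k) * ((C1 * A - C2 * B) / (2 * k)) = C1 * (A::real)"
  by (simp add: field_simps)
lemma algF: "k \<noteq> 0 \<Longrightarrow> (C1 * A - C2 * B) / (2 * k) * (2 * k) = C1 * A - C2 * (B::real)"
  by (simp add: field_simps)

context
  fixes L \<alpha> lam c :: real and \<psi> :: "real \<Rightarrow> real"
  assumes L: "L > 0" and al: "\<alpha> > 0" and lam: "lam > 0" and c: "c > 0"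
    and E: "\<psi> \<in> E_L L" and W: "weak_sol L \<alpha> lam c \<psi>"
begin

lemmas cellr2 = cell_rep[OF L al lam c E W]
lemmas kinkr2 = kink_rep[OF L al lam c E W]
lemmas pcont2 = psi_cont[OF L al lam c E W]
lemmas ppos2 = psi_pos[OF L al lam c E W]
lemmas pper2 = psi_per[OF L al lam c E W]
lemmas cellx = cell_explicit[OF L al lam c E W]
lemmas kkf = kk_facts[OF L al lam c E W]

lemma Fl_shift_cont: "isCont (\<lambda>x. Fl lam c C1 C2 (x - s)) y"
  unfolding Fl_def divide_inverse by (intro continuous_intros)
lemma Fd_shift_cont: "isCont (\<lambda>x. Fd lam c C1 C2 (x - s)) y"
  unfolding Fd_def divide_inverse by (intro continuous_intros)
lemma Fl_shift_DERIV: "DERIV (\<lambda>x. Fl lam c C1 C2 (x - s)) y :> Fd lam c C1 C2 (y - s)"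
proof -
  have d: "DERIV (\<lambda>x. x - s) y :> 1" by (auto intro!: derivative_eq_intros)
  show ?thesis using DERIV_chain2[OF Fl_DERIV d] by simp
qed

lemma main_facts:
  "\<exists>C1 C2. (\<forall>x. -L/2 < x \<longrightarrow> x < L/2 \<longrightarrow> \<psi> x = Fl lam c C1 C2 x \<and> DERIV \<psi> x :> Fd lam c C1 C2 x)
      \<and> \<psi> (-L/2) = Fl lam c C1 C2 (-L/2) \<and> \<psi> (L/2) = Fl lam c C1 C2 (L/2)
      \<and> (\<forall>x. -L/2 \<le> x \<longrightarrow> x \<le> L/2 \<longrightarrow> Fl lam c C1 C2 x \<le> Fl lam c C1 C2 (L/2))"
proof -
  obtain C1 C2 where C: "\<And>x. -L/2 < x \<Longrightarrow> x < L/2 \<Longrightarrow> \<psi> x = Fl lam c C1 C2 x \<and> DERIV \<psi> x :> Fd lam c C1 C2 x"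
    using cellx by blast
  define l where "l = -L/2"
  define m where "m = L/2"
  define F where "F = Fl lam c C1 C2"
  define Fd' where "Fd' = Fd lam c C1 C2"
  define mu where "mu = lam\<^sup>2 - lam * c"
  define k where "k = kk lam c"
  define r1 where "r1 = lam + k"
  define r2 where "r2 = lam - k"
  define K where "K = - \<alpha> * L * \<psi> (L/2)"
  have k: "k > 0" using kkf unfolding k_def by auto
  have r1: "r1 > 0" using lam k unfolding r1_def by simp
  have lm: "l < m" "-L < l" "l < 0" "0 < m" "m - L = l" "l + L = m" using L unfolding l_def m_def by auto
  have pc: "isCont \<psi> x" for x using pcont2 continuous_on_eq_continuous_at by blast
  have Cl: "\<And>x. l < x \<Longrightarrow> x < m \<Longrightarrow> \<psi> x = F x" and Cd: "\<And>x. l < x \<Longrightarrow> x < m \<Longrightarrow> DERIV \<psi> x :> Fd' x"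
    using C unfolding l_def m_def F_def Fd'_def by auto
  have Fc: "isCont F x" for x unfolding F_def by (rule Fl_cont)
  have psil: "\<psi> l = F l" by (rule eq_at_left_end[OF pc Fc lm(1) Cl])
  have psim: "\<psi> m = F m" by (rule eq_at_right_end[OF pc Fc lm(1) Cl])
  have Flm: "F l = F m" using psil psim pper2[of l] lm by simp
  have dP1: "DERIV (Psi1 L \<psi>) x :> \<psi> x" if "l < x" for x using Psi1_DERIV[OF pcont2] that lm by auto
  have dP2: "DERIV (Psi2 L \<psi>) x :> Psi1 L \<psi> x" if "l < x" for x using Psi2_DERIV[OF pcont2] that lm by auto
  have P1c: "isCont (Psi1 L \<psi>) m" using dP1[of m] lm DERIV_isCont by auto
  obtain p q where pq: "\<And>x. 0 < x \<Longrightarrow> x < L \<Longrightarrow> Uf L lam c \<psi> x - K * max (x - L/2) 0 = p + q * x"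
    using kinkr2 unfolding K_def by blast
  have dU: "DERIV (Uf L lam c \<psi>) x :> D - 2 * lam * \<psi> x + mu * Psi1 L \<psi> x"
    if "DERIV \<psi> x :> D" "l < x" for x D
  proof -
    have "DERIV (\<lambda>x. \<psi> x - 2 * lam * Psi1 L \<psi> x + mu * Psi2 L \<psi> x) x :> D - 2 * lam * \<psi> x + mu * Psi1 L \<psi> x"
      by (intro DERIV_add DERIV_diff DERIV_cmult that dP1 dP2)
    then show ?thesis unfolding Uf_def[abs_def] mu_def .
  qed
  have left: "Fd' x - 2 * lam * F x + mu * Psi1 L \<psi> x = q" if x: "0 < x" "x < m" for x
  proof -
    have d1: "DERIV (Uf L lam c \<psi>) x :> Fd' x - 2 * lam * \<psi> x + mu * Psi1 L \<psi> x"
      by (rule dU) (use Cd x lm in auto)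
    have "DERIV (\<lambda>x. p + q * x) x :> 0 + q * 1" by (intro DERIV_add DERIV_cmult DERIV_const DERIV_ident)
    then have "DERIV (\<lambda>x. p + q * x) x :> q" by simp
    then have "DERIV (Uf L lam c \<psi>) x :> q"
    proof (rule has_field_derivative_transform_within_open[where S="{0<..<m}"])
      fix y assume y: "y \<in> {0<..<m}"
      then have "max (y - L/2) 0 = 0" unfolding m_def by auto
      then show "p + q * y = Uf L lam c \<psi> y" using pq[of y] y lm by (auto simp: m_def)
    qed (use x in auto)
    then have "Fd' x - 2 * lam * \<psi> x + mu * Psi1 L \<psi> x = q" using d1 DERIV_unique by blast
    then show ?thesis using Cl[of x] x lm by simp
  qed
  have right: "Fd' (x - L) - 2 * lam * F (x - L) + mu * Psi1 L \<psi> x = q + K" if x: "m < x" "x < L" for x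
  proof -
    have eqs: "\<psi> y = F (y - L)" if "y \<in> {m<..<L}" for y
    proof -
      have "\<psi> y = \<psi> ((y - L) + L)" by simp
      also have "\<dots> = \<psi> (y - L)" by (rule pper2)
      also have "\<dots> = F (y - L)" by (rule Cl) (use that lm in auto)
      finally show ?thesis .
    qed
    have "DERIV (\<lambda>y. F (y - L)) x :> Fd' (x - L)" unfolding F_def Fd'_def by (rule Fl_shift_DERIV)
    then have dpsi: "DERIV \<psi> x :> Fd' (x - L)"
      by (rule has_field_derivative_transform_within_open[where S="{m<..<L}"]) (use x eqs in auto)
    have d1: "DERIV (Uf L lam c \<psi>) x :> Fd' (x - L) - 2 * lam * \<psi> x + mu * Psi1 L \<psi> x"
      by (rule dU[OF dpsi]) (use x lm in auto)
    have "DERIV (\<lambda>x. p + q * x + K * (x - L/2)) x :> 0 + q * 1 + K * (1 - 0)"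
      by (intro DERIV_add DERIV_cmult DERIV_const DERIV_ident DERIV_diff)
    then have "DERIV (\<lambda>x. p + q * x + K * (x - L/2)) x :> q + K" by simp
    then have "DERIV (Uf L lam c \<psi>) x :> q + K"
    proof (rule has_field_derivative_transform_within_open[where S="{m<..<L}"])
      fix y assume y: "y \<in> {m<..<L}"
      then have "max (y - L/2) 0 = y - L/2" unfolding m_def by auto
      then show "p + q * y + K * (y - L/2) = Uf L lam c \<psi> y" using pq[of y] y lm by (auto simp: m_def)
    qed (use x in auto)
    then have "Fd' (x - L) - 2 * lam * \<psi> x + mu * Psi1 L \<psi> x = q + K" using d1 DERIV_unique by blast
    then show ?thesis using eqs[of x] x by simp
  qed
  have f1c: "isCont (\<lambda>x. Fd' x - 2 * lam * F x + mu * Psi1 L \<psi> x) m"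
    unfolding F_def Fd'_def by (intro continuous_intros Fl_cont Fd_cont P1c)
  have f2c: "isCont (\<lambda>x. Fd' (x - L) - 2 * lam * F (x - L) + mu * Psi1 L \<psi> x) m"
    unfolding F_def Fd'_def by (intro continuous_intros Fl_shift_cont Fd_shift_cont P1c)
  have "Fd' m - 2 * lam * F m + mu * Psi1 L \<psi> m = q"
    using eq_at_right_end[OF f1c continuous_const lm(4), of q] left by simp
  moreover have "Fd' (m - L) - 2 * lam * F (m - L) + mu * Psi1 L \<psi> m = q + K"
    using eq_at_left_end[OF f2c continuous_const, of L "q + K"] right lm L by (simp add: m_def)
  ultimately have jump: "Fd' l - Fd' m = K" using Flm lm(5) by simp
  have Gx: "Fd' x - r1 * F x = C2 * exp (r2 * x)" for x
    using algG[of k lam C1 "exp (r1 * x)" C2 "exp (r2 * x)"] k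
    unfolding F_def Fd'_def Fl_def Fd_def r1_def r2_def k_def by simp
  have Hx: "Fd' x - r2 * F x = C1 * exp (r1 * x)" for x
    using algH[of k lam C1 "exp (r1 * x)" C2 "exp (r2 * x)"] k
    unfolding F_def Fd'_def Fl_def Fd_def r1_def r2_def k_def by simp
  have Kneg: "K < 0" unfolding K_def using al L ppos2[of "L/2"] by (simp add: mult_pos_pos)
  have C2pos: "C2 * (exp (r2 * m) - exp (r2 * l)) > 0"
  proof -
    have "C2 * (exp (r2 * m) - exp (r2 * l)) = (Fd' m - r1 * F m) - (Fd' l - r1 * F l)"
      using Gx[of m] Gx[of l] by (simp add: algebra_simps)
    also have "\<dots> = - K" using jump Flm by simp
    finally show ?thesis using Kneg by simp
  qed
  have Fcont: "continuous_on {l..m} F" using Fc continuous_at_imp_continuous_on by blast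
  obtain x0 where x0: "x0 \<in> {l..m}" "\<And>y. y \<in> {l..m} \<Longrightarrow> F y \<le> F x0"
    using continuous_attains_sup[OF compact_Icc _ Fcont] lm by auto
  have maxF: "F x \<le> F m" if "l \<le> x" "x \<le> m" for x
  proof (rule ccontr)
    assume "\<not> F x \<le> F m"
    then have gt: "F x0 > F m" using x0(2)[of x] that by simp
    have "x0 \<noteq> m" using gt by auto
    moreover have "x0 \<noteq> l" using gt Flm by auto
    ultimately have x0i: "l < x0" "x0 < m" using x0(1) by auto
    define d where "d = min (x0 - l) (m - x0)"
    have dd: "0 < d" "d \<le> x0 - l" "d \<le> m - x0" using x0i by (auto simp: d_def)
    have loc: "F y \<le> F x0" if "\<bar>x0 - y\<bar> < d" for y
    proof -
      have "l \<le> y" "y \<le> m" using that dd by (auto simp: abs_less_iff)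
      then show ?thesis using x0(2) by auto
    qed
    have Fd0: "Fd' x0 = 0"
    proof (rule DERIV_local_max)
      show "DERIV F x0 :> Fd' x0" unfolding F_def Fd'_def by (rule Fl_DERIV)
      show "0 < d" by (rule dd(1))
      show "\<forall>y. \<bar>x0 - y\<bar> < d \<longrightarrow> F y \<le> F x0" using loc by blast
    qed
    define ps where "ps = F x0"
    have ps: "ps > 0" using Cl[OF x0i] ppos2[of x0] unfolding ps_def by simp
    have h0: "C1 * exp (r1 * x0) = - r2 * ps" using Hx[of x0] Fd0 unfolding ps_def by simp
    have g0: "C2 * exp (r2 * x0) = - r1 * ps" using Gx[of x0] Fd0 unfolding ps_def by simp
    have "r1 * ps > 0" using r1 ps by simp
    then have "C2 * exp (r2 * x0) < 0" using g0 by simp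
    then have "C2 < 0" by (simp add: mult_less_0_iff)
    then have "exp (r2 * m) - exp (r2 * l) < 0" using C2pos by (simp add: zero_less_mult_iff)
    then have rr: "r2 * m < r2 * l" by simp
    have r2neg: "r2 < 0"
    proof (rule ccontr)
      assume "\<not> r2 < 0"
      then have "r2 * l \<le> r2 * m" using lm(1) by (intro mult_left_mono) auto
      then show False using rr by simp
    qed
    define t where "t = m - x0"
    have t: "t > 0" using x0i by (simp add: t_def)
    have a1: "r1 * m = r1 * x0 + r1 * t" unfolding t_def by (simp add: algebra_simps)
    have a2: "r2 * m = r2 * x0 + r2 * t" unfolding t_def by (simp add: algebra_simps)
    have e1: "exp (r1 * m) = exp (r1 * x0) * exp (r1 * t)" by (subst a1) (rule exp_add)
    have e2: "exp (r2 * m) = exp (r2 * x0) * exp (r2 * t)" by (subst a2) (rule exp_add)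
    have "F m * (2 * k) = C1 * exp (r1 * m) - C2 * exp (r2 * m)"
      using algF[of k C1 "exp (r1 * m)" C2 "exp (r2 * m)"] k
      unfolding F_def Fl_def r1_def r2_def k_def by simp
    also have "\<dots> = (C1 * exp (r1 * x0)) * exp (r1 * t) - (C2 * exp (r2 * x0)) * exp (r2 * t)"
      unfolding e1 e2 by (simp only: mult.assoc)
    also have "\<dots> = ps * (- r2 * exp (r1 * t) + r1 * exp (r2 * t))"
      unfolding h0 g0 by (simp add: algebra_simps)
    also have "\<dots> > ps * (- r2 * (1 + r1 * t) + r1 * (1 + r2 * t))"
    proof (rule mult_strict_left_mono[OF _ ps])
      have "r1 * t > 0" using r1 t by simp
      then have "1 + r1 * t < exp (r1 * t)" by (rule exp_strict)
      then have i1: "- r2 * (1 + r1 * t) < - r2 * exp (r1 * t)" using r2neg by simp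
      have "1 + r2 * t \<le> exp (r2 * t)" by (rule exp_ge_add_one_self)
      then have i2: "r1 * (1 + r2 * t) \<le> r1 * exp (r2 * t)" using r1 by simp
      show "- r2 * (1 + r1 * t) + r1 * (1 + r2 * t) < - r2 * exp (r1 * t) + r1 * exp (r2 * t)"
        using i1 i2 by linarith
    qed
    also have "ps * (- r2 * (1 + r1 * t) + r1 * (1 + r2 * t)) = ps * (2 * k)"
      unfolding r1_def r2_def by (simp add: algebra_simps)
    finally have "ps * (2 * k) < F m * (2 * k)" .
    then have "F m > ps" using k by simp
    then show False using gt unfolding ps_def by simp
  qed
  have A1: "\<forall>x. -L/2 < x \<longrightarrow> x < L/2 \<longrightarrow> \<psi> x = Fl lam c C1 C2 x \<and> DERIV \<psi> x :> Fd lam c C1 C2 x"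
    using C by blast
  have A2: "\<psi> (-L/2) = Fl lam c C1 C2 (-L/2)" "\<psi> (L/2) = Fl lam c C1 C2 (L/2)"
    using psil psim unfolding l_def m_def F_def by auto
  have A3: "\<forall>x. -L/2 \<le> x \<longrightarrow> x \<le> L/2 \<longrightarrow> Fl lam c C1 C2 x \<le> Fl lam c C1 C2 (L/2)"
    using maxF unfolding l_def m_def F_def by blast
  show ?thesis using A1 A2 A3 by blast
qed

end


lemma Fl_shift_DERIV3: "DERIV (\<lambda>x. Fl lam c C1 C2 (x - s)) y :> Fd lam c C1 C2 (y - s)"
proof -
  have d: "DERIV (\<lambda>x. x - s) y :> 1" by (auto intro!: derivative_eq_intros)
  show ?thesis using DERIV_chain2[OF Fl_DERIV d] by simp
qed
lemma Fd_shift_cont3: "isCont (\<lambda>x. Fd lam c C1 C2 (x - s)) y"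
  unfolding Fd_def divide_inverse by (intro continuous_intros)

context
  fixes L \<alpha> lam c :: real and \<psi> :: "real \<Rightarrow> real"
  assumes L: "L > 0" and al: "\<alpha> > 0" and lam: "lam > 0" and c: "c > 0"
    and E: "\<psi> \<in> E_L L" and W: "weak_sol L \<alpha> lam c \<psi>"
begin

lemmas mf = main_facts[OF L al lam c E W]
lemmas pc3 = psi_cont[OF L al lam c E W]
lemmas pperi3 = psi_per_int[OF L al lam c E W]

lemma reduce: "\<exists>n::int. -L/2 < x - real_of_int n * L \<and> x - real_of_int n * L \<le> L/2"
proof -
  define n where "n = \<lceil>(x - L/2) / L\<rceil>"
  have c1: "(x - L/2) / L \<le> real_of_int n" and c2: "real_of_int n - 1 < (x - L/2) / L"
    using ceiling_correct unfolding n_def by auto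
  have "x - L/2 \<le> real_of_int n * L" using c1 L by (simp add: pos_divide_le_eq)
  moreover have "(real_of_int n - 1) * L < x - L/2" using c2 L by (simp add: pos_less_divide_eq)
  ultimately show ?thesis by (intro exI[of _ n]) (auto simp: algebra_simps)
qed

theorem final_result: "piecewise_C1 \<psi> \<and> (\<forall>x. \<psi> (L / 2) \<ge> \<psi> x)"
proof -
  obtain C1 C2 where
    A1: "\<And>x. -L/2 < x \<Longrightarrow> x < L/2 \<Longrightarrow> \<psi> x = Fl lam c C1 C2 x \<and> DERIV \<psi> x :> Fd lam c C1 C2 x" and
    A2: "\<psi> (-L/2) = Fl lam c C1 C2 (-L/2)" "\<psi> (L/2) = Fl lam c C1 C2 (L/2)" and
    A3: "\<And>x. -L/2 \<le> x \<Longrightarrow> x \<le> L/2 \<Longrightarrow> Fl lam c C1 C2 x \<le> Fl lam c C1 C2 (L/2)"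
    using mf by blast
  define F where "F = Fl lam c C1 C2"
  define D where "D = Fd lam c C1 C2"
  define l where "l = -L/2"
  define m where "m = L/2"
  have lm: "l < m" "m - L = l" "l + L = m" using L by (auto simp: l_def m_def)
  have shift: "\<psi> z = \<psi> (z - real_of_int n * L)" for z n
    using pperi3[of "z - real_of_int n * L" n] by simp
  have loc: "DERIV \<psi> y :> D (y - real_of_int n * L)"
    if "l + real_of_int n * L < y" "y < m + real_of_int n * L" for y n
  proof -
    have "DERIV (\<lambda>z. F (z - real_of_int n * L)) y :> D (y - real_of_int n * L)"
      unfolding F_def D_def by (rule Fl_shift_DERIV3)
    then show ?thesis
    proof (rule has_field_derivative_transform_within_open[where S="{l + real_of_int n * L<..<m + real_of_int n * L}"])
      fix z assume z: "z \<in> {l + real_of_int n * L<..<m + real_of_int n * L}"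
      then have "\<psi> (z - real_of_int n * L) = F (z - real_of_int n * L)"
        using A1[of "z - real_of_int n * L"] unfolding F_def l_def m_def by auto
      then show "F (z - real_of_int n * L) = \<psi> z" using shift[of z n] by simp
    qed (use that in auto)
  qed
  have locd: "deriv \<psi> y = D (y - real_of_int n * L)"
    if "l + real_of_int n * L < y" "y < m + real_of_int n * L" for y n
    using loc[OF that] DERIV_imp_deriv by blast
  have Dc: "isCont (\<lambda>z. D (z - s)) y" for s y unfolding D_def by (rule Fd_shift_cont3)
  have maxp: "\<psi> x \<le> \<psi> m" for x
  proof -
    obtain n :: int where n: "l < x - real_of_int n * L" "x - real_of_int n * L \<le> m"
      using reduce unfolding l_def m_def by blast
    have "\<psi> x = \<psi> (x - real_of_int n * L)" by (rule shift)
    also have "\<dots> \<le> \<psi> m"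
    proof (cases "x - real_of_int n * L = m")
      case True then show ?thesis by simp
    next
      case False
      then have "x - real_of_int n * L < m" using n by simp
      then have "\<psi> (x - real_of_int n * L) = F (x - real_of_int n * L)"
        using A1 n unfolding F_def l_def m_def by auto
      also have "\<dots> \<le> F m" using A3[of "x - real_of_int n * L"] n unfolding F_def l_def m_def by auto
      also have "\<dots> = \<psi> m" using A2 unfolding F_def m_def by simp
      finally show ?thesis .
    qed
    finally show ?thesis .
  qed
  define S where "S = {s. \<exists>k::int. s = (real_of_int k + 1/2) * L}"
  have Sm: "(real_of_int k + 1/2) * L = m + real_of_int k * L" for k unfolding m_def by (simp add: algebra_simps)
  have notS: "\<exists>n::int. l + real_of_int n * L < x \<and> x < m + real_of_int n * L" if xS: "x \<notin> S" for x
  proof -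
    obtain n :: int where n: "l < x - real_of_int n * L" "x - real_of_int n * L \<le> m"
      using reduce unfolding l_def m_def by blast
    have "m + real_of_int n * L \<in> S" unfolding S_def using Sm[of n] by (intro CollectI exI[of _ n]) simp
    then have "x \<noteq> m + real_of_int n * L" using xS by auto
    then show ?thesis using n by (intro exI[of _ n]) auto
  qed
  have fin: "finite (S \<inter> {a..b})" for a b
  proof -
    have "S \<inter> {a..b} \<subseteq> (\<lambda>k::int. (real_of_int k + 1/2) * L) ` {\<lfloor>a / L\<rfloor> - 1..\<lceil>b / L\<rceil>}"
    proof
      fix s assume s: "s \<in> S \<inter> {a..b}"
      then obtain k :: int where k: "s = (real_of_int k + 1/2) * L" unfolding S_def by auto
      have "a \<le> (real_of_int k + 1/2) * L" "(real_of_int k + 1/2) * L \<le> b" using s k by auto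
      then have "a / L \<le> real_of_int k + 1/2" "real_of_int k + 1/2 \<le> b / L"
        using L by (simp_all add: pos_divide_le_eq pos_le_divide_eq)
      moreover note of_int_floor_le[of "a / L"] le_of_int_ceiling[of "b / L"]
      ultimately have "real_of_int (\<lfloor>a / L\<rfloor> - 1) < real_of_int k" "real_of_int k < real_of_int (\<lceil>b / L\<rceil> + 1)"
        by linarith+
      then have "\<lfloor>a / L\<rfloor> - 1 < k" "k < \<lceil>b / L\<rceil> + 1" by (simp_all only: of_int_less_iff)
      then show "s \<in> (\<lambda>k::int. (real_of_int k + 1/2) * L) ` {\<lfloor>a / L\<rfloor> - 1..\<lceil>b / L\<rceil>}"
        using k by auto
    qed
    then show ?thesis by (rule finite_subset) auto
  qed
  have diff: "\<psi> differentiable (at x)" if "x \<notin> S" for x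
    using notS[OF that] loc real_differentiable_def by blast
  have dcont: "isCont (deriv \<psi>) x" if xS: "x \<notin> S" for x
  proof -
    obtain n :: int where n: "l + real_of_int n * L < x" "x < m + real_of_int n * L" using notS[OF xS] by blast
    have "eventually (\<lambda>z. z \<in> {l + real_of_int n * L<..<m + real_of_int n * L}) (nhds x)"
      by (rule eventually_nhds_in_open) (use n in auto)
    then have "eventually (\<lambda>z. deriv \<psi> z = D (z - real_of_int n * L)) (nhds x)"
      by eventually_elim (auto intro: locd)
    then have "isCont (deriv \<psi>) x = isCont (\<lambda>z. D (z - real_of_int n * L)) x" by (rule isCont_cong)
    then show ?thesis using Dc by blast
  qed
  have lims: "(\<exists>l'. (deriv \<psi> \<longlongrightarrow> l') (at_left s)) \<and> (\<exists>r. (deriv \<psi> \<longlongrightarrow> r) (at_right s))" if sS: "s \<in> S" for s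
  proof -
    obtain k :: int where k: "s = m + real_of_int k * L" using sS Sm unfolding S_def by auto
    have "((\<lambda>z. D (z - real_of_int k * L)) \<longlongrightarrow> D (s - real_of_int k * L)) (at_left s)"
      using Dc[where s="real_of_int k * L" and y=s] by (simp add: isCont_def filterlim_at_split)
    moreover have "\<forall>\<^sub>F z in at_left s. D (z - real_of_int k * L) = deriv \<psi> z"
    proof -
      have "\<forall>\<^sub>F z in at_left s. z \<in> {s - L<..<s}" by (rule eventually_at_left_real) (use L in simp)
      then show ?thesis
      proof eventually_elim
        case (elim z)
        then show ?case using locd[where n=k and y=z] k lm by (auto simp: algebra_simps)
      qed
    qed
    ultimately have left: "(deriv \<psi> \<longlongrightarrow> D (s - real_of_int k * L)) (at_left s)"
      by (rule Lim_transform_eventually)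
    have "((\<lambda>z. D (z - real_of_int (k + 1) * L)) \<longlongrightarrow> D (s - real_of_int (k + 1) * L)) (at_right s)"
      using Dc[where s="real_of_int (k + 1) * L" and y=s] by (simp add: isCont_def filterlim_at_split)
    moreover have "\<forall>\<^sub>F z in at_right s. D (z - real_of_int (k + 1) * L) = deriv \<psi> z"
    proof -
      have "\<forall>\<^sub>F z in at_right s. z \<in> {s<..<s + L}" by (rule eventually_at_right_real) (use L in simp)
      then show ?thesis
      proof eventually_elim
        case (elim z)
        then show ?case using locd[where n="k + 1" and y=z] k lm by (auto simp: algebra_simps)
      qed
    qed
    ultimately have right: "(deriv \<psi> \<longlongrightarrow> D (s - real_of_int (k + 1) * L)) (at_right s)"
      by (rule Lim_transform_eventually)
    show ?thesis using left right by blast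
  qed
  have "piecewise_C1 \<psi>"
    unfolding piecewise_C1_def
  proof (intro conjI exI[of _ S])
    show "continuous_on UNIV \<psi>" by (rule pc3)
    show "\<forall>a b. finite (S \<inter> {a..b})" using fin by blast
    show "\<forall>x. x \<notin> S \<longrightarrow> \<psi> differentiable (at x)" using diff by blast
    show "continuous_on (- S) (deriv \<psi>)" using dcont by (intro continuous_at_imp_continuous_on) auto
    show "\<forall>s\<in>S. (\<exists>l. (deriv \<psi> \<longlongrightarrow> l) (at_left s)) \<and> (\<exists>r. (deriv \<psi> \<longlongrightarrow> r) (at_right s))"
      using lims by blast
  qed
  then show ?thesis using maxp unfolding m_def by blast
qed

end

theorem mainTheorem18:
  fixes L \<alpha> lam c :: real and \<psi> :: "real \<Rightarrow> real"
  assumes "L > 0" and "\<alpha> > 0"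
    and "lam > 0" and "c > 0" and "\<psi> \<in> E_L L"
    and "weak_sol L \<alpha> lam c \<psi>"
  shows "piecewise_C1 \<psi> \<and> (\<forall>x. \<psi> (L / 2) \<ge> \<psi> x)"
  by (rule final_result[OF assms])

end
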